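(* Let $\ell$ be a prime, $L$ a finite extension of $\mathbb Q_\ell$, $\tau$ a field automorphism of $L$ of order $2$, $L^\tau$ its fixed field, $\lambda$ a uniformizer of $L^\tau$, $v_\lambda$ the valuation on $\overline{\mathbb Q_\ell}$ with $v_\lambda(\lambda)=1$, and $f$ the inertia degree of $L^\tau$ over $\mathbb Q_\ell$. Let $C=\{x\in\mathcal O_L^\times:x\tau(x)=1\}$ and $C(n)=\{x\in C:v_\lambda(x-1)\ge n\}$ for $n\ge 0$. If $\ell\neq2$, then $|C(0)/C(1)|=2\ell^f$ if $L/L^\tau$ is ramified and $|C(0)/C(1)|=\ell^f+1$ if $L/L^\tau$ is unramified. If $\ell=2$ and $0\le n\le v_\lambda(2)$, then $|C(n)/C(n+1)|\le 4^f$. *)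

theory Defs
  imports Complex_Main "HOL-Computational_Algebra.Primes"
begin

text \<open>A normalized discrete valuation on a field: w x is meaningful for x \<noteq> 0
  (the valuation of 0 is +infinity, handled by explicit case distinctions).\<close>
definition normalized_discrete_valuation :: "('a::field \<Rightarrow> int) \<Rightarrow> bool" where
  "normalized_discrete_valuation w \<longleftrightarrow>
     (\<forall>x y. x \<noteq> 0 \<longrightarrow> y \<noteq> 0 \<longrightarrow> w (x * y) = w x + w y) \<and>
     (\<forall>x y. x \<noteq> 0 \<longrightarrow> y \<noteq> 0 \<longrightarrow> x + y \<noteq> 0 \<longrightarrow> w (x + y) \<ge> min (w x) (w y)) \<and>
     (\<exists>p. p \<noteq> 0 \<and> w p = 1)"

definition val_ring :: "('a::field \<Rightarrow> int) \<Rightarrow> 'a set" where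
  "val_ring w = {x. x = 0 \<or> w x \<ge> 0}"

definition val_units :: "('a::field \<Rightarrow> int) \<Rightarrow> 'a set" where
  "val_units w = {x. x \<noteq> 0 \<and> w x = 0}"

definition residue_field :: "('a::field \<Rightarrow> int) \<Rightarrow> 'a set \<Rightarrow> 'a set set" where
  "residue_field w K = (val_ring w \<inter> K) //
     {(x, y). x \<in> val_ring w \<inter> K \<and> y \<in> val_ring w \<inter> K \<and> (x = y \<or> w (x - y) > 0)}"

definition val_complete :: "('a::field \<Rightarrow> int) \<Rightarrow> bool" where
  "val_complete w \<longleftrightarrow>
     (\<forall>s :: nat \<Rightarrow> 'a.
        (\<forall>N::int. \<exists>M. \<forall>m\<ge>M. \<forall>n\<ge>M. s m = s n \<or> w (s m - s n) \<ge> N) \<longrightarrow>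
        (\<exists>y. \<forall>N::int. \<exists>M. \<forall>n\<ge>M. s n = y \<or> w (s n - y) \<ge> N))"

text \<open>L (the carrier type, of characteristic 0) with normalized valuation w is a finite
  extension of Q_ell: complete for a discrete valuation, finite residue field of
  characteristic ell.\<close>
definition ell_adic_local_field :: "nat \<Rightarrow> ('a::field_char_0 \<Rightarrow> int) \<Rightarrow> bool" where
  "ell_adic_local_field ell w \<longleftrightarrow>
     normalized_discrete_valuation w \<and> val_complete w \<and>
     finite (residue_field w UNIV) \<and> w (of_nat ell) > 0"

definition field_aut :: "('a::field \<Rightarrow> 'a) \<Rightarrow> bool" where
  "field_aut t \<longleftrightarrow> bij t \<and> (\<forall>x y. t (x + y) = t x + t y) \<and>
     (\<forall>x y. t (x * y) = t x * t y) \<and> t 1 = 1"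

definition fixed_field :: "('a \<Rightarrow> 'a) \<Rightarrow> 'a set" where
  "fixed_field t = {x. t x = x}"

text \<open>Ramification index of L over the subfield K (w normalized on L):
  the positive generator of w(K^*).\<close>
definition ram_index :: "('a::field \<Rightarrow> int) \<Rightarrow> 'a set \<Rightarrow> int" where
  "ram_index w K = (LEAST k. k > 0 \<and> (\<exists>x\<in>K. x \<noteq> 0 \<and> w x = k))"

definition is_uniformizer :: "('a::field \<Rightarrow> int) \<Rightarrow> 'a set \<Rightarrow> 'a \<Rightarrow> bool" where
  "is_uniformizer w K p \<longleftrightarrow> p \<in> K \<and> p \<noteq> 0 \<and> w p = ram_index w K"

definition inertia_degree :: "nat \<Rightarrow> ('a::field \<Rightarrow> int) \<Rightarrow> 'a set \<Rightarrow> nat" where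
  "inertia_degree ell w K = (THE f. card (residue_field w K) = ell ^ f)"

definition v_lam :: "('a::field \<Rightarrow> int) \<Rightarrow> 'a \<Rightarrow> 'a \<Rightarrow> real" where
  "v_lam w lam x = real_of_int (w x) / real_of_int (w lam)"

definition C_grp :: "('a::field \<Rightarrow> int) \<Rightarrow> ('a \<Rightarrow> 'a) \<Rightarrow> 'a set" where
  "C_grp w t = {x \<in> val_units w. x * t x = 1}"

text \<open>C(n) = {x in C. v_lambda(x - 1) \<ge> n}, with v_lambda(0) = infinity.\<close>
definition C_filt :: "('a::field \<Rightarrow> int) \<Rightarrow> ('a \<Rightarrow> 'a) \<Rightarrow> 'a \<Rightarrow> nat \<Rightarrow> 'a set" where
  "C_filt w t lam n = {x \<in> C_grp w t. x = 1 \<or> v_lam w lam (x - 1) \<ge> real n}"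

definition quot_cosets :: "'a::field set \<Rightarrow> 'a set \<Rightarrow> 'a set set" where
  "quot_cosets G H = (\<lambda>x. (\<lambda>h. x * h) ` H) ` G"

end

theory Submission
  imports Defs
begin

definition vge :: "('a::field \<Rightarrow> int) \<Rightarrow> int \<Rightarrow> 'a \<Rightarrow> bool" where
  "vge w k x \<longleftrightarrow> x = 0 \<or> k \<le> w x"

locale dval =
  fixes w :: "'a::field_char_0 \<Rightarrow> int"
  assumes ndv: "normalized_discrete_valuation w"
begin

abbreviation V where "V \<equiv> vge w"

lemma wmult: "x \<noteq> 0 \<Longrightarrow> y \<noteq> 0 \<Longrightarrow> w (x * y) = w x + w y"
  using ndv unfolding normalized_discrete_valuation_def by blast

lemma wadd: "x \<noteq> 0 \<Longrightarrow> y \<noteq> 0 \<Longrightarrow> x + y \<noteq> 0 \<Longrightarrow> min (w x) (w y) \<le> w (x + y)"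
  using ndv unfolding normalized_discrete_valuation_def by blast

lemma unif_ex: "\<exists>p. p \<noteq> 0 \<and> w p = 1"
  using ndv unfolding normalized_discrete_valuation_def by blast

lemma w1[simp]: "w 1 = 0"
  using wmult[of 1 1] by simp

lemma wm1[simp]: "w (-1) = 0"
  using wmult[of "-1" "-1"] by simp

lemma wneg[simp]: "w (- x) = w x"
proof (cases "x = 0")
  case False
  then show ?thesis using wmult[of "-1" x] by simp
qed simp

lemma winv: "x \<noteq> 0 \<Longrightarrow> w (inverse x) = - w x"
  using wmult[of x "inverse x"] by simp

lemma wdiv: "x \<noteq> 0 \<Longrightarrow> y \<noteq> 0 \<Longrightarrow> w (x / y) = w x - w y"
  by (simp add: divide_inverse wmult winv)

lemma wpow: "x \<noteq> 0 \<Longrightarrow> w (x ^ n) = int n * w x"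
  by (induction n) (auto simp: wmult algebra_simps)

lemma wdiff_sym: "w (x - y) = w (y - x)"
  by (metis minus_diff_eq wneg)

lemma V0[simp]: "V k 0" by (simp add: vge_def)

lemma V_add: "V k x \<Longrightarrow> V k y \<Longrightarrow> V k (x + y)"
  unfolding vge_def using wadd[of x y] by fastforce

lemma V_neg[simp]: "V k (- x) = V k x"
  by (simp add: vge_def)

lemma V_diff: "V k x \<Longrightarrow> V k y \<Longrightarrow> V k (x - y)"
  using V_add[of k x "-y"] by simp

lemma V_diff_sym: "V k (x - y) = V k (y - x)"
  by (metis V_neg minus_diff_eq)

lemma V_mult: "V a x \<Longrightarrow> V b y \<Longrightarrow> V (a + b) (x * y)"
  unfolding vge_def by (cases "x = 0"; cases "y = 0") (auto simp: wmult)

lemma V_mono: "V k x \<Longrightarrow> j \<le> k \<Longrightarrow> V j x"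
  unfolding vge_def by auto

lemma V_sum: "(\<And>i. i \<in> A \<Longrightarrow> V k (f i)) \<Longrightarrow> V k (sum f A)"
proof (induction A rule: infinite_finite_induct)
  case (insert x F)
  then show ?case by (simp add: V_add)
qed simp_all

lemma V_all_zero: "(\<And>N. V N x) \<Longrightarrow> x = 0"
proof (rule ccontr)
  assume "\<And>N. V N x" "x \<noteq> 0"
  then have "w x + 1 \<le> w x" unfolding vge_def by blast
  then show False by simp
qed

lemma V_nz: "x \<noteq> 0 \<Longrightarrow> V k x \<longleftrightarrow> k \<le> w x"
  by (simp add: vge_def)

lemma V_divide: "V k x \<Longrightarrow> y \<noteq> 0 \<Longrightarrow> V (k - w y) (x / y)"
  unfolding vge_def by (cases "x = 0") (auto simp: wdiv)

lemma V_mult_unit: "w u = 0 \<Longrightarrow> u \<noteq> 0 \<Longrightarrow> V k (u * x) = V k x"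
  unfolding vge_def by (cases "x = 0") (auto simp: wmult)

lemma V_div_unit: "w u = 0 \<Longrightarrow> u \<noteq> 0 \<Longrightarrow> V k (x / u) = V k x"
  unfolding vge_def by (cases "x = 0") (auto simp: wdiv)

lemma V_strict: "x \<noteq> 0 \<Longrightarrow> w x < k \<Longrightarrow> V k y \<Longrightarrow> x + y \<noteq> 0 \<and> w (x + y) = w x"
proof -
  assume x: "x \<noteq> 0" "w x < k" "V k y"
  show ?thesis
  proof (cases "y = 0")
    case True then show ?thesis using x by simp
  next
    case False
    then have wy: "w x < w y" using x by (auto simp: vge_def)
    have ne: "x + y \<noteq> 0"
    proof
      assume "x + y = 0" then have "y = - x" by (simp add: add_eq_0_iff)
      then show False using wy by simp
    qed
    have "min (w x) (w y) \<le> w (x + y)" using wadd[OF x(1) False ne] .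
    then have ge: "w x \<le> w (x + y)" using wy by simp
    have "min (w (x + y)) (w (-y)) \<le> w (x + y + - y)"
      using wadd[of "x+y" "-y"] ne False x(1) by simp
    then have "w x \<ge> w (x + y)" using wy by (simp add: min_def split: if_splits)
    then show ?thesis using ge ne by simp
  qed
qed

lemma V_of_nat: "V 0 (of_nat n)"
proof (induction n)
  case (Suc n)
  have "V 0 (1::'a)" by (simp add: vge_def)
  then show ?case using Suc V_add[of 0 "of_nat n" 1] by (simp add: add.commute)
qed simp

lemma V_of_int: "V 0 (of_int i)"
proof (cases i rule: int_cases)
  case (nonneg n) then show ?thesis using V_of_nat[of n] by simp
next
  case (neg n)
  have "V 0 (- (of_nat (Suc n)::'a))" using V_of_nat[of "Suc n"] V_neg by blast
  then show ?thesis using neg by simp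
qed

lemma V0_pow: "V 0 y \<Longrightarrow> V 0 (y ^ n)"
proof (induction n)
  case (Suc n) then show ?case using V_mult[of 0 y 0 "y^n"] by simp
qed (simp add: vge_def)

lemma V_pow_diff: "V 0 x \<Longrightarrow> V 0 y \<Longrightarrow> V k (x - y) \<Longrightarrow> V k (x ^ n - y ^ n)"
proof (induction n)
  case (Suc n)
  have "x ^ Suc n - y ^ Suc n = x * (x ^ n - y ^ n) + (x - y) * y ^ n"
    by (simp add: algebra_simps)
  moreover have "V 0 (y ^ n)" using V0_pow Suc.prems by blast
  ultimately show ?case using Suc V_mult[of 0 x k] V_mult[of k "x - y" 0 "y^n"] V_add by auto
qed simp


lemma V_unit_iff: "x \<noteq> 0 \<Longrightarrow> V 0 x \<Longrightarrow> \<not> V 1 x \<Longrightarrow> w x = 0"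
  by (simp add: vge_def)

end

lemma card_image_factor:
  assumes "finite (g ` A)" "\<And>x y. x \<in> A \<Longrightarrow> y \<in> A \<Longrightarrow> g x = g y \<Longrightarrow> h x = h y"
  shows "finite (h ` A) \<and> card (h ` A) \<le> card (g ` A)"
proof -
  define k where "k z = h (SOME x. x \<in> A \<and> g x = z)" for z
  have "k (g x) = h x" if "x \<in> A" for x
  proof -
    have "\<exists>y. y \<in> A \<and> g y = g x" using that by blast
    then have "(SOME y. y \<in> A \<and> g y = g x) \<in> A \<and> g (SOME y. y \<in> A \<and> g y = g x) = g x"
      by (rule someI_ex)
    then show ?thesis unfolding k_def using assms(2) that by metis
  qed
  then have "h ` A = k ` (g ` A)" by (auto simp: image_image intro!: image_cong)
  then show ?thesis using assms(1) by (simp add: card_image_le)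
qed

definition cls :: "'a set \<Rightarrow> ('a \<Rightarrow> 'a \<Rightarrow> bool) \<Rightarrow> 'a \<Rightarrow> 'a set" where
  "cls A E x = {y \<in> A. E x y}"

definition classes :: "'a set \<Rightarrow> ('a \<Rightarrow> 'a \<Rightarrow> bool) \<Rightarrow> 'a set set" where
  "classes A E = cls A E ` A"

definition eqv :: "'a set \<Rightarrow> ('a \<Rightarrow> 'a \<Rightarrow> bool) \<Rightarrow> bool" where
  "eqv A E \<longleftrightarrow> (\<forall>x\<in>A. E x x) \<and> (\<forall>x\<in>A. \<forall>y\<in>A. E x y \<longrightarrow> E y x) \<and>
     (\<forall>x\<in>A. \<forall>y\<in>A. \<forall>z\<in>A. E x y \<longrightarrow> E y z \<longrightarrow> E x z)"

lemma eqv_D: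
  assumes "eqv A E"
  shows "x \<in> A \<Longrightarrow> E x x" "x \<in> A \<Longrightarrow> y \<in> A \<Longrightarrow> E x y \<Longrightarrow> E y x"
    "x \<in> A \<Longrightarrow> y \<in> A \<Longrightarrow> z \<in> A \<Longrightarrow> E x y \<Longrightarrow> E y z \<Longrightarrow> E x z"
  using assms unfolding eqv_def by blast+

lemma cls_eq: "eqv A E \<Longrightarrow> x \<in> A \<Longrightarrow> y \<in> A \<Longrightarrow> cls A E x = cls A E y \<longleftrightarrow> E x y"
proof
  assume e: "eqv A E" and xy: "x \<in> A" "y \<in> A"
  assume "cls A E x = cls A E y"
  moreover have "y \<in> cls A E y" using eqv_D(1)[OF e xy(2)] xy unfolding cls_def by simp
  ultimately show "E x y" unfolding cls_def by blast
next
  assume e: "eqv A E" and xy: "x \<in> A" "y \<in> A" and E: "E x y"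
  have E': "E y x" using eqv_D(2)[OF e xy E] .
  show "cls A E x = cls A E y"
  proof (rule set_eqI)
    fix z
    show "z \<in> cls A E x \<longleftrightarrow> z \<in> cls A E y"
    proof
      assume "z \<in> cls A E x"
      then have z: "z \<in> A" "E x z" unfolding cls_def by simp_all
      then show "z \<in> cls A E y" using eqv_D(3)[OF e xy(2) xy(1) z(1) E' z(2)] unfolding cls_def by simp
    next
      assume "z \<in> cls A E y"
      then have z: "z \<in> A" "E y z" unfolding cls_def by simp_all
      then show "z \<in> cls A E x" using eqv_D(3)[OF e xy(1) xy(2) z(1) E z(2)] unfolding cls_def by simp
    qed
  qed
qed

lemma classes_le_inj:
  assumes "eqv A E" "eqv B E'" "\<And>x. x \<in> A \<Longrightarrow> f x \<in> B"
    "\<And>x y. x \<in> A \<Longrightarrow> y \<in> A \<Longrightarrow> E' (f x) (f y) \<Longrightarrow> E x y"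
    "finite (classes B E')"
  shows "finite (classes A E) \<and> card (classes A E) \<le> card (classes B E')"
proof -
  have sub: "(\<lambda>x. cls B E' (f x)) ` A \<subseteq> classes B E'" using assms(3) unfolding classes_def by auto
  then have fin: "finite ((\<lambda>x. cls B E' (f x)) ` A)" using assms(5) finite_subset by blast
  have "finite (cls A E ` A) \<and> card (cls A E ` A) \<le> card ((\<lambda>x. cls B E' (f x)) ` A)"
  proof (rule card_image_factor[OF fin])
    fix x y assume xy: "x \<in> A" "y \<in> A" "cls B E' (f x) = cls B E' (f y)"
    then have "E' (f x) (f y)" using cls_eq[OF assms(2)] assms(3) by blast
    then have "E x y" using assms(4) xy by blast
    then show "cls A E x = cls A E y" using cls_eq[OF assms(1)] xy by blast
  qed
  moreover have "card ((\<lambda>x. cls B E' (f x)) ` A) \<le> card (classes B E')"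
    using sub assms(5) card_mono by blast
  ultimately have "finite (cls A E ` A) \<and> card (cls A E ` A) \<le> card (classes B E')" by linarith
  then show ?thesis unfolding classes_def[of A E] .
qed

lemma classes_le_surj:
  assumes "eqv A E" "eqv B E'" "\<And>x. x \<in> A \<Longrightarrow> f x \<in> B"
    "\<And>x y. x \<in> A \<Longrightarrow> y \<in> A \<Longrightarrow> E x y \<Longrightarrow> E' (f x) (f y)"
    "\<And>y. y \<in> B \<Longrightarrow> \<exists>x\<in>A. E' y (f x)"
    "finite (classes A E)"
  shows "finite (classes B E') \<and> card (classes B E') \<le> card (classes A E)"
proof -
  have eq: "classes B E' = (\<lambda>x. cls B E' (f x)) ` A"
  proof
    show "classes B E' \<subseteq> (\<lambda>x. cls B E' (f x)) ` A"
    proof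
      fix c assume "c \<in> classes B E'"
      then obtain y where y: "y \<in> B" "c = cls B E' y" unfolding classes_def by auto
      then obtain x where x: "x \<in> A" "E' y (f x)" using assms(5) by blast
      have "f x \<in> B" using assms(3) x(1) .
      then have "cls B E' y = cls B E' (f x)" using y(1) x(2) cls_eq[OF assms(2)] by blast
      then have "c = cls B E' (f x)" using y(2) by simp
      then show "c \<in> (\<lambda>x. cls B E' (f x)) ` A" using x by blast
    qed
  next
    show "(\<lambda>x. cls B E' (f x)) ` A \<subseteq> classes B E'" using assms(3) unfolding classes_def by blast
  qed
  have fin: "finite (cls A E ` A)" using assms(6) unfolding classes_def .
  have "finite ((\<lambda>x. cls B E' (f x)) ` A) \<and> card ((\<lambda>x. cls B E' (f x)) ` A) \<le> card (cls A E ` A)"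
  proof (rule card_image_factor[OF fin])
    fix x y assume xy: "x \<in> A" "y \<in> A" "cls A E x = cls A E y"
    then have "E x y" using cls_eq[OF assms(1)] by blast
    then have "E' (f x) (f y)" using assms(4) xy by blast
    then show "cls B E' (f x) = cls B E' (f y)" using cls_eq[OF assms(2)] xy assms(3) by blast
  qed
  then show ?thesis unfolding eq classes_def[of A E] .
qed

lemma classes_eq:
  assumes "eqv A E" "eqv B E'" "\<And>x. x \<in> A \<Longrightarrow> f x \<in> B"
    "\<And>x y. x \<in> A \<Longrightarrow> y \<in> A \<Longrightarrow> E x y \<longleftrightarrow> E' (f x) (f y)"
    "\<And>y. y \<in> B \<Longrightarrow> \<exists>x\<in>A. E' y (f x)"
  shows "finite (classes B E') \<longleftrightarrow> finite (classes A E)" "card (classes B E') = card (classes A E)"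
proof -
  have i1: "E x y" if "x \<in> A" "y \<in> A" "E' (f x) (f y)" for x y using assms(4)[OF that(1,2)] that(3) by (rule iffD2)
  have s1: "E' (f x) (f y)" if "x \<in> A" "y \<in> A" "E x y" for x y using assms(4)[OF that(1,2)] that(3) by (rule iffD1)
  have I: "finite (classes A E) \<and> card (classes A E) \<le> card (classes B E')" if fb: "finite (classes B E')"
    by (rule classes_le_inj[of A E B E' f, OF assms(1) assms(2) assms(3) i1 fb])
  have S: "finite (classes B E') \<and> card (classes B E') \<le> card (classes A E)" if fa: "finite (classes A E)"
    by (rule classes_le_surj[of A E B E' f, OF assms(1) assms(2) assms(3) s1 assms(5) fa])
  show "finite (classes B E') \<longleftrightarrow> finite (classes A E)"
  proof
    assume "finite (classes B E')" then show "finite (classes A E)" using I by blast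
  next
    assume "finite (classes A E)" then show "finite (classes B E')" using S by blast
  qed
  show "card (classes B E') = card (classes A E)"
  proof (cases "finite (classes A E)")
    case True
    have a: "card (classes B E') \<le> card (classes A E)" using S[OF True] by (rule conjunct2)
    have "finite (classes B E')" using S[OF True] by (rule conjunct1)
    then have b: "card (classes A E) \<le> card (classes B E')" using I by blast
    show ?thesis using a b by (rule le_antisym)
  next
    case False
    have "\<not> finite (classes B E')"
    proof
      assume "finite (classes B E')" then have "finite (classes A E)" using I by blast
      then show False using False by contradiction
    qed
    then show ?thesis using False by simp
  qed
qed

definition E2 :: "('a \<Rightarrow> 'a \<Rightarrow> bool) \<Rightarrow> 'a \<times> 'a \<Rightarrow> 'a \<times> 'a \<Rightarrow> bool" where
  "E2 E p q \<longleftrightarrow> E (fst p) (fst q) \<and> E (snd p) (snd q)"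

lemma eqv_E2: assumes "eqv A E" shows "eqv (A \<times> A) (E2 E)"
proof -
  note D = eqv_D[OF assms]
  have R: "E2 E p p" if "p \<in> A \<times> A" for p using that D(1) unfolding E2_def by auto
  have S: "E2 E q p" if "p \<in> A \<times> A" "q \<in> A \<times> A" "E2 E p q" for p q
    using that D(2) unfolding E2_def by auto
  have T: "E2 E p r" if "p \<in> A \<times> A" "q \<in> A \<times> A" "r \<in> A \<times> A" "E2 E p q" "E2 E q r" for p q r
  proof -
    have "E (fst p) (fst r)" using that D(3)[of "fst p" "fst q" "fst r"] unfolding E2_def by auto
    moreover have "E (snd p) (snd r)" using that D(3)[of "snd p" "snd q" "snd r"] unfolding E2_def by auto
    ultimately show ?thesis unfolding E2_def by simp
  qed
  show ?thesis unfolding eqv_def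
  proof (intro conjI ballI impI)
    fix x y z assume "x \<in> A \<times> A" "y \<in> A \<times> A" "z \<in> A \<times> A" "E2 E x y" "E2 E y z"
    then show "E2 E x z" by (rule T)
  next
    fix x y assume "x \<in> A \<times> A" "y \<in> A \<times> A" "E2 E x y"
    then show "E2 E y x" by (rule S)
  next
    fix x assume "x \<in> A \<times> A" then show "E2 E x x" by (rule R)
  qed
qed

lemma classes_prod:
  assumes "eqv A E" "finite (classes A E)"
  shows "finite (classes (A \<times> A) (E2 E)) \<and> card (classes (A \<times> A) (E2 E)) = card (classes A E) ^ 2"
proof -
  define g where "g = map_prod (cls A E) (cls A E)"
  have gim: "g ` (A \<times> A) = classes A E \<times> classes A E"
    unfolding g_def by (rule map_prod_surj_on) (simp_all add: classes_def)
  have fing: "finite (g ` (A \<times> A))" unfolding gim using assms(2) by simp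
  have ee: "g p = g q \<longleftrightarrow> cls (A \<times> A) (E2 E) p = cls (A \<times> A) (E2 E) q" if pq: "p \<in> A \<times> A" "q \<in> A \<times> A" for p q
  proof -
    obtain a b where p: "p = (a, b)" "a \<in> A" "b \<in> A" using pq(1) by blast
    obtain c d where q: "q = (c, d)" "c \<in> A" "d \<in> A" using pq(2) by blast
    have "cls (A \<times> A) (E2 E) p = cls (A \<times> A) (E2 E) q \<longleftrightarrow> E2 E p q"
      using cls_eq[OF eqv_E2[OF assms(1)] pq] .
    also have "\<dots> \<longleftrightarrow> E a c \<and> E b d" unfolding E2_def p q by simp
    also have "\<dots> \<longleftrightarrow> cls A E a = cls A E c \<and> cls A E b = cls A E d"
      using cls_eq[OF assms(1) p(2) q(2)] cls_eq[OF assms(1) p(3) q(3)] by simp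
    also have "\<dots> \<longleftrightarrow> g p = g q" unfolding g_def p q by simp
    finally show ?thesis by simp
  qed
  have 1: "finite (cls (A \<times> A) (E2 E) ` (A \<times> A)) \<and> card (cls (A \<times> A) (E2 E) ` (A \<times> A)) \<le> card (g ` (A \<times> A))"
  proof (rule card_image_factor[OF fing])
    fix x y assume "x \<in> A \<times> A" "y \<in> A \<times> A" "g x = g y"
    then show "cls (A \<times> A) (E2 E) x = cls (A \<times> A) (E2 E) y" using ee by simp
  qed
  have 2: "finite (g ` (A \<times> A)) \<and> card (g ` (A \<times> A)) \<le> card (cls (A \<times> A) (E2 E) ` (A \<times> A))"
  proof (rule card_image_factor)
    show "finite (cls (A \<times> A) (E2 E) ` (A \<times> A))" using 1 by simp
    fix x y assume "x \<in> A \<times> A" "y \<in> A \<times> A" "cls (A \<times> A) (E2 E) x = cls (A \<times> A) (E2 E) y"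
    then show "g x = g y" using ee by simp
  qed
  have "card (g ` (A \<times> A)) = card (classes A E) ^ 2"
    unfolding gim card_cartesian_product power2_eq_square ..
  moreover have "card (cls (A \<times> A) (E2 E) ` (A \<times> A)) = card (g ` (A \<times> A))"
    using 1 2 by linarith
  ultimately show ?thesis unfolding classes_def[of "A \<times> A"] using 1 by simp
qed

context dval begin

lemma eqvV: "eqv A (\<lambda>x y. V k (x - y))"
proof -
  have r: "V k (x - x)" for x by (simp add: vge_def)
  have s: "V k (y - x)" if "V k (x - y)" for x y
    using that V_neg[of k "x - y"] by (simp only: minus_diff_eq)
  have t: "V k (x - z)" if "V k (x - y)" "V k (y - z)" for x y z
    using V_add[OF that] by simp
  show ?thesis unfolding eqv_def
  proof (intro conjI ballI impI)
    fix x y z assume "V k (x - y)" "V k (y - z)"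
    then show "V k (x - z)" by (rule t)
  next
    fix x y assume "V k (x - y)"
    then show "V k (y - x)" by (rule s)
  qed (rule r)
qed

end


context dval begin

lemma V1_mult_1: "V 1 (x - 1) \<Longrightarrow> V 1 (z - 1) \<Longrightarrow> V 1 (x * z - 1)"
proof -
  assume a: "V 1 (x - 1)" "V 1 (z - 1)"
  have x0: "V 0 x" using V_add[OF V_mono[OF a(1), of 0], of 1] by (simp add: vge_def)
  have e: "x * z - 1 = x * (z - 1) + (x - 1)" by (simp add: algebra_simps)
  have "V 1 (x * (z - 1))" using V_mult[OF x0 a(2)] by simp
  then show ?thesis unfolding e using a(1) by (rule V_add)
qed

lemma V1_pow_1: "V 1 (x - 1) \<Longrightarrow> V 1 (x ^ j - 1)"
  by (induction j) (auto intro: V1_mult_1)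

lemma V0_of_1unit: "V 1 (x - 1) \<Longrightarrow> V 0 x"
  using V_add[OF V_mono[of 1 "x - 1" 0], of 1] by (simp add: vge_def)

lemma hensel:
  assumes a: "V 1 (a - 1)" and n: "n > 0" and wn: "w (of_nat n) = 0"
    and comp: "val_complete w"
  shows "\<exists>y. y ^ n = a"
proof -
  define N :: 'a where "N = of_nat n"
  have N0: "N \<noteq> 0" using n unfolding N_def by simp
  have wN: "w N = 0" using wn unfolding N_def .
  define f where "f y = y + (a - y ^ n) / N" for y
  define s where "s k = (f ^^ k) 1" for k
  have s_Suc: "s (Suc k) = s k + (a - s k ^ n) / N" for k unfolding s_def f_def by simp
  have inv: "V 1 (s k - 1) \<and> V (int k + 1) (a - s k ^ n)" for k
  proof (induction k)
    case 0
    then show ?case using a by (simp add: s_def)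
  next
    case (Suc k)
    define y where "y = s k"
    define d where "d = (a - y ^ n) / N"
    have y1: "V 1 (y - 1)" and ya: "V (int k + 1) (a - y ^ n)" using Suc unfolding y_def by auto
    have dV: "V (int k + 1) d" unfolding d_def using V_div_unit[OF wN N0] ya by simp
    have y'1: "V 1 (y + d - 1)"
      using V_add[OF y1 V_mono[OF dV]] by (simp add: algebra_simps)
    have ad: "a - y ^ n = N * d" unfolding d_def using N0 by simp
    have pd: "(y + d) ^ n - y ^ n = d * (\<Sum>i<n. y ^ (n - Suc i) * (y + d) ^ i)"
      using power_diff_sumr2[of "y + d" n y] by simp
    have Nsum: "N = (\<Sum>i<n. (1::'a))" unfolding N_def by simp
    have "a - (y + d) ^ n = (a - y ^ n) - ((y + d) ^ n - y ^ n)" by simp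
    also have "\<dots> = d * (\<Sum>i<n. (1 - y ^ (n - Suc i) * (y + d) ^ i))"
      unfolding ad pd Nsum by (simp add: sum_subtractf algebra_simps sum_distrib_left)
    finally have eq: "a - (y + d) ^ n = d * (\<Sum>i<n. (1 - y ^ (n - Suc i) * (y + d) ^ i))" .
    have "V 1 (\<Sum>i<n. (1 - y ^ (n - Suc i) * (y + d) ^ i))"
    proof (rule V_sum)
      fix i
      have "V 1 (y ^ (n - Suc i) * (y + d) ^ i - 1)"
        using V1_mult_1[OF V1_pow_1[OF y1] V1_pow_1[OF y'1]] .
      then show "V 1 (1 - y ^ (n - Suc i) * (y + d) ^ i)" using V_diff_sym[of 1] by blast
    qed
    then have "V (int k + 1 + 1) (a - (y + d) ^ n)" unfolding eq using V_mult[OF dV] by blast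
    then show ?case using y'1 unfolding y_def d_def by (simp add: s_Suc add.commute)
  qed
  have inc: "V (int k + 1) (s (Suc k) - s k)" for k
    using inv[of k] V_div_unit[OF wN N0] by (simp add: s_Suc)
  have cau1: "V (int M) (s m - s M)" if "M \<le> m" for M m
    using that
  proof (induction m rule: dec_induct)
    case base then show ?case by simp
  next
    case (step m)
    have e: "s (Suc m) - s M = (s (Suc m) - s m) + (s m - s M)" by simp
    have "V (int M) (s (Suc m) - s m)" using V_mono[OF inc[of m]] step by simp
    then show ?case unfolding e using step(3) by (rule V_add)
  qed
  have "\<forall>Nn::int. \<exists>M. \<forall>m\<ge>M. \<forall>k\<ge>M. s m = s k \<or> w (s m - s k) \<ge> Nn"
  proof
    fix Nn :: int
    have "\<forall>m\<ge>nat Nn. \<forall>k\<ge>nat Nn. V Nn (s m - s k)"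
    proof (intro allI impI)
      fix m k assume "nat Nn \<le> m" "nat Nn \<le> k"
      then have "V (int (nat Nn)) (s m - s (nat Nn))" "V (int (nat Nn)) (s k - s (nat Nn))"
        using cau1 by blast+
      then have "V (int (nat Nn)) (s m - s k)" using V_diff by fastforce
      then show "V Nn (s m - s k)" using V_mono by fastforce
    qed
    then show "\<exists>M. \<forall>m\<ge>M. \<forall>k\<ge>M. s m = s k \<or> w (s m - s k) \<ge> Nn"
      unfolding vge_def by auto
  qed
  then obtain Y where Y: "\<forall>Nn::int. \<exists>M. \<forall>k\<ge>M. s k = Y \<or> w (s k - Y) \<ge> Nn"
    using comp unfolding val_complete_def by blast
  have "V Nn (Y ^ n - a)" for Nn
  proof -
    define N' where "N' = max Nn 1"
    obtain M where M: "\<forall>k\<ge>M. s k = Y \<or> w (s k - Y) \<ge> N'" using Y by blast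
    define k where "k = max M (nat N')"
    have sk: "V N' (s k - Y)" using M unfolding k_def vge_def by auto
    have sk0: "V 0 (s k)" using V0_of_1unit inv by blast
    have Y0: "V 0 Y"
    proof -
      have "V 0 (s k - Y)" using V_mono[OF sk] unfolding N'_def by simp
      then have "V 0 (s k - (s k - Y))" using V_diff[OF sk0] by blast
      then show ?thesis by simp
    qed
    have "V N' (Y ^ n - s k ^ n)" using V_pow_diff[OF Y0 sk0] sk V_diff_sym by blast
    moreover have "V N' (s k ^ n - a)"
    proof -
      have "V (int k + 1) (a - s k ^ n)" using inv by blast
      then have "V N' (a - s k ^ n)" by (rule V_mono) (simp add: k_def N'_def)
      then show ?thesis using V_diff_sym by blast
    qed
    ultimately have "V N' (Y ^ n - a)" using V_add by fastforce
    then show ?thesis by (rule V_mono) (simp add: N'_def)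
  qed
  then have "Y ^ n - a = 0" by (rule V_all_zero)
  then show ?thesis by auto
qed

end


locale LF = dval w for w :: "'a::field_char_0 \<Rightarrow> int" +
  fixes t :: "'a \<Rightarrow> 'a" and lam :: 'a and ell :: nat
  assumes ell_prime: "prime ell" and comp: "val_complete w"
    and finres: "finite (residue_field w UNIV)" and wl: "w (of_nat ell) > 0"
    and aut: "field_aut t" and tt: "t \<circ> t = id" and nid: "t \<noteq> id"
    and unif: "is_uniformizer w (fixed_field t) lam"
begin

lemma t_add: "t (x + y) = t x + t y" using aut unfolding field_aut_def by blast
lemma t_mult: "t (x * y) = t x * t y" using aut unfolding field_aut_def by blast
lemma t_one[simp]: "t 1 = 1" using aut unfolding field_aut_def by blast
lemma t_bij: "bij t" using aut unfolding field_aut_def by blast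
lemma t_t[simp]: "t (t x) = x" using tt by (metis comp_apply id_apply)
lemma t_zero[simp]: "t 0 = 0" using t_add[of 0 0] by simp
lemma t_neg: "t (- x) = - t x" using t_add[of x "-x"] by (simp add: eq_neg_iff_add_eq_0 add.commute)
lemma t_diff: "t (x - y) = t x - t y" using t_add[of x "-y"] t_neg by simp
lemma t_eq0[simp]: "t x = 0 \<longleftrightarrow> x = 0" by (metis t_t t_zero)
lemma t_inverse: "t (inverse x) = inverse (t x)"
proof (cases "x = 0")
  case False
  then have "t x * t (inverse x) = 1" using t_mult[of x "inverse x"] by simp
  then show ?thesis by (metis inverse_unique)
qed simp
lemma t_divide: "t (x / y) = t x / t y" by (simp add: divide_inverse t_mult t_inverse)
lemma t_pow: "t (x ^ n) = t x ^ n" by (induction n) (simp_all add: t_mult)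
lemma t_of_nat[simp]: "t (of_nat n) = of_nat n" by (induction n) (simp_all add: t_add)
lemma t_of_int[simp]: "t (of_int i) = of_int i"
  by (cases i rule: int_cases) (simp_all add: t_neg t_add t_diff)
lemma t_sum: "t (sum f A) = sum (\<lambda>i. t (f i)) A"
  by (induction A rule: infinite_finite_induct) (simp_all add: t_add)

abbreviation L :: 'a where "L \<equiv> of_nat ell"

lemma L_nz: "L \<noteq> 0" using ell_prime by (simp add: prime_gt_0_nat)

lemma w_of_nat_unit:
  assumes "\<not> ell dvd n" shows "w (of_nat n) = 0"
proof -
  have n0: "n \<noteq> 0" using assms by (metis dvd_0_right)
  then have N0: "(of_nat n :: 'a) \<noteq> 0" by simp
  have "coprime ell n" using prime_imp_coprime[OF ell_prime assms] .
  then have "gcd ell n = 1" by (simp add: coprime_iff_gcd_eq_1)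
  then have "gcd (int ell) (int n) = 1" by simp
  then obtain u v where uv: "u * int ell + v * int n = 1" using bezout_int[of "int ell" "int n"] by auto
  then have uv': "of_int u * L + of_int v * of_nat n = (1::'a)"
    by (metis of_int_1 of_int_add of_int_mult of_int_of_nat_eq)
  have ge: "0 \<le> w (of_nat n :: 'a)" using V_of_nat[of n] N0 by (simp add: vge_def)
  show ?thesis
  proof (rule ccontr)
    assume "w (of_nat n :: 'a) \<noteq> 0"
    then have "V 1 (of_nat n :: 'a)" using ge by (simp add: vge_def)
    then have a: "V 1 (of_int v * of_nat n :: 'a)" using V_mult[OF V_of_int] by fastforce
    have "V 1 L" using wl by (simp add: vge_def)
    then have b: "V 1 (of_int u * L)" using V_mult[OF V_of_int] by fastforce
    have "V 1 (1::'a)" using V_add[OF b a] uv' by simp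
    then show False by (simp add: vge_def)
  qed
qed

definition pn :: nat where "pn = (SOME p. prime p \<and> p > nat (w L) + ell)"

lemma pn: "prime pn" "pn > nat (w L) + ell"
  using someI_ex[OF bigger_prime[of "nat (w L) + ell"]] unfolding pn_def by auto

lemma pn_unit: "w (of_nat pn :: 'a) = 0"
proof (rule w_of_nat_unit)
  show "\<not> ell dvd pn"
  proof
    assume "ell dvd pn"
    then have "ell = pn" using pn(1) ell_prime by (metis prime_nat_iff prime_gt_1_nat less_irrefl)
    then show False using pn(2) by simp
  qed
qed

lemma O_char: "V 0 x \<longleftrightarrow> (\<exists>y. y ^ pn = 1 + L * x ^ pn)"
proof
  assume x: "V 0 x"
  have "V 1 (L * x ^ pn)" using V_mult[OF _ V0_pow[OF x], of 1 L] wl by (simp add: vge_def)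
  then show "\<exists>y. y ^ pn = 1 + L * x ^ pn"
    using hensel[of "1 + L * x ^ pn" pn] pn_unit comp pn(1) prime_gt_0_nat by auto
next
  assume "\<exists>y. y ^ pn = 1 + L * x ^ pn"
  then obtain y where y: "y ^ pn = 1 + L * x ^ pn" by blast
  show "V 0 x"
  proof (rule ccontr)
    assume nx: "\<not> V 0 x"
    then have x0: "x \<noteq> 0" and wx: "w x < 0" by (auto simp: vge_def)
    define z where "z = L * x ^ pn"
    have z0: "z \<noteq> 0" unfolding z_def using x0 L_nz by simp
    have wz: "w z = w L + int pn * w x" unfolding z_def using x0 L_nz by (simp add: wmult wpow)
    have "int pn * w x \<le> int pn * (-1)" using wx by (intro mult_left_mono) auto
    then have "int pn * w x \<le> - int pn" by simp
    moreover have "w L < int pn" using pn(2) wl by linarith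
    ultimately have wzn: "w z < 0" using wz by linarith
    have s: "z + 1 \<noteq> 0 \<and> w (z + 1) = w z" using V_strict[OF z0 wzn, of 1] by (simp add: vge_def)
    have "pn > 0" using pn(1) prime_gt_0_nat by blast
    then have y0: "y \<noteq> 0" using y s unfolding z_def by (metis add.commute zero_power)
    have "int pn * w y = w z" using s y wpow[OF y0, of pn] unfolding z_def by (simp add: add.commute)
    then have "int pn dvd w L" using wz by (metis dvd_def dvd_diff_commute dvd_triv_left right_diff_distrib' add_diff_cancel_right')
    moreover have "0 < w L" using wl .
    ultimately have "int pn \<le> w L" by (simp add: zdvd_imp_le)
    then show False using \<open>w L < int pn\<close> by simp
  qed
qed

lemma t_O: "V 0 x \<Longrightarrow> V 0 (t x)"
proof -
  assume "V 0 x"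
  then obtain y where y: "y ^ pn = 1 + L * x ^ pn" using O_char by blast
  have "t y ^ pn = 1 + L * t x ^ pn" using arg_cong[of _ _ t, OF y]
    by (simp add: t_pow t_add t_mult)
  then show "V 0 (t x)" using O_char by blast
qed

lemma t_O_iff: "V 0 (t x) \<longleftrightarrow> V 0 x"
  using t_O t_t by metis

lemma unit_char: "x \<noteq> 0 \<Longrightarrow> w x = 0 \<longleftrightarrow> V 0 x \<and> V 0 (inverse x)"
  by (auto simp: vge_def winv)

lemma t_unit: "x \<noteq> 0 \<Longrightarrow> w (t x) = 0 \<longleftrightarrow> w x = 0"
proof -
  assume x: "x \<noteq> 0"
  have "V 0 (inverse (t x)) \<longleftrightarrow> V 0 (inverse x)" using t_O_iff[of "inverse x"] t_inverse[of x] by simp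
  then show ?thesis using unit_char[OF x] unit_char[of "t x"] t_O_iff[of x] x by simp
qed

lemma t_pos: "x \<noteq> 0 \<Longrightarrow> w x > 0 \<Longrightarrow> w (t x) > 0"
proof -
  assume x: "x \<noteq> 0" "w x > 0"
  then have "V 0 (t x)" using t_O[of x] by (simp add: vge_def)
  moreover have "w (t x) \<noteq> 0" using t_unit[OF x(1)] x(2) by simp
  ultimately show ?thesis using x(1) by (simp add: vge_def)
qed

lemma t_w: "w (t x) = w x"
proof (cases "x = 0")
  case True then show ?thesis by simp
next
  case False
  then have x0: "x \<noteq> 0" .
  obtain p where p: "p \<noteq> 0" "w p = 1" using unif_ex by blast
  have wtp: "w (t p) = 1"
  proof -
    have pos: "w (t p) > 0" using t_pos p by simp
    have "\<not> w (t p) \<ge> 2"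
    proof
      assume ge: "w (t p) \<ge> 2"
      define s where "s = t p / p"
      have s0: "s \<noteq> 0" unfolding s_def using p by simp
      have ws: "w s > 0" unfolding s_def using p ge by (simp add: wdiv)
      have "p = t (t p)" by simp
      also have "t p = p * s" unfolding s_def using p by simp
      finally have "p = t p * t s" by (simp add: t_mult)
      then have "w p = w (t p) + w (t s)" using wmult[of "t p" "t s"] s0 p by simp
      moreover have "w (t s) > 0" using t_pos[OF s0 ws] .
      ultimately show False using ge p by simp
    qed
    then show ?thesis using pos by simp
  qed
  define k where "k = w x"
  show ?thesis
  proof (cases "k \<ge> 0")
    case True
    define u where "u = x / p ^ nat k"
    have u0: "u \<noteq> 0" and wu: "w u = 0" unfolding u_def using x0 p True
      by (auto simp: wdiv wpow k_def)
    have "x = p ^ nat k * u" unfolding u_def using p by simp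
    then have "t x = t p ^ nat k * t u" by (simp add: t_mult t_pow)
    moreover have "w (t u) = 0" using t_unit[OF u0] wu by simp
    ultimately show ?thesis using wtp p u0 True by (simp add: wmult wpow k_def)
  next
    case False
    define u where "u = x * p ^ nat (- k)"
    have u0: "u \<noteq> 0" and wu: "w u = 0" unfolding u_def using x0 p False
      by (auto simp: wmult wpow k_def)
    have "x = u / p ^ nat (- k)" unfolding u_def using p by simp
    then have "t x = t u / t p ^ nat (- k)" by (simp add: t_divide t_pow)
    moreover have "w (t u) = 0" using t_unit[OF u0] wu by simp
    ultimately show ?thesis using wtp p u0 False by (simp add: wdiv wpow k_def)
  qed
qed

lemma t_V: "V k (t x) \<longleftrightarrow> V k x"
  by (simp add: vge_def t_w)

end


context LF begin

abbreviation K where "K \<equiv> fixed_field t"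
abbreviation e where "e \<equiv> ram_index w K"

lemma inK: "x \<in> K \<longleftrightarrow> t x = x" by (simp add: fixed_field_def)

lemma K_add: "x \<in> K \<Longrightarrow> y \<in> K \<Longrightarrow> x + y \<in> K" by (simp add: inK t_add)
lemma K_diff: "x \<in> K \<Longrightarrow> y \<in> K \<Longrightarrow> x - y \<in> K" by (simp add: inK t_diff)
lemma K_mult: "x \<in> K \<Longrightarrow> y \<in> K \<Longrightarrow> x * y \<in> K" by (simp add: inK t_mult)
lemma K_divide: "x \<in> K \<Longrightarrow> y \<in> K \<Longrightarrow> x / y \<in> K" by (simp add: inK t_divide)
lemma K_pow: "x \<in> K \<Longrightarrow> x ^ n \<in> K" by (simp add: inK t_pow)
lemma K_of_nat: "of_nat n \<in> K" by (simp add: inK)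
lemma K_of_int: "of_int n \<in> K" by (simp add: inK)
lemma K_norm: "x * t x \<in> K" by (simp add: inK t_mult mult.commute)
lemma K_trace: "x + t x \<in> K" by (simp add: inK t_add add.commute)

lemma lam: "lam \<in> K" "lam \<noteq> 0" "w lam = e"
  using unif unfolding is_uniformizer_def by auto

definition Pr :: "int \<Rightarrow> bool" where "Pr k \<longleftrightarrow> k > 0 \<and> (\<exists>x\<in>K. x \<noteq> 0 \<and> w x = k)"

lemma Pr2: "Pr 2"
proof -
  obtain p where p: "p \<noteq> 0" "w p = 1" using unif_ex by blast
  have "p * t p \<in> K" "p * t p \<noteq> 0" "w (p * t p) = 2" using K_norm p by (auto simp: wmult t_w)
  moreover have "(0::int) < 2" by simp
  ultimately show ?thesis unfolding Pr_def by blast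
qed

lemma e_facts: "Pr e" "\<And>k. Pr k \<Longrightarrow> e \<le> k"
proof -
  define m where "m = (LEAST n::nat. Pr (int n))"
  have P2: "Pr (int 2)" using Pr2 by simp
  have m: "Pr (int m)" unfolding m_def using LeastI[of "\<lambda>n. Pr (int n)", OF P2] .
  have ml: "int m \<le> k" if "Pr k" for k
  proof -
    have "k > 0" using that unfolding Pr_def by simp
    then have "Pr (int (nat k))" using that by simp
    then have "m \<le> nat k" unfolding m_def by (rule Least_le)
    then show ?thesis using \<open>k > 0\<close> by simp
  qed
  have "e = int m" unfolding ram_index_def Pr_def[symmetric]
    by (rule Least_equality) (use m ml in auto)
  then show "Pr e" "\<And>k. Pr k \<Longrightarrow> e \<le> k" using m ml by auto
qed

lemma e_pos: "e > 0" using e_facts(1) unfolding Pr_def by simp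
lemma e_le2: "e \<le> 2" using e_facts(2)[OF Pr2] .
lemma e_cases: "e = 1 \<or> e = 2" using e_pos e_le2 by linarith

lemma K_val_dvd: assumes "x \<in> K" "x \<noteq> 0" shows "e dvd w x"
proof -
  define qq where "qq = w x div e"
  define r where "r = w x mod e"
  have wx: "w x = e * qq + r" unfolding qq_def r_def by simp
  have r: "0 \<le> r" "r < e" unfolding r_def using e_pos by auto
  obtain y where y: "y \<in> K" "y \<noteq> 0" "w y = r"
  proof (cases "qq \<ge> 0")
    case True
    define y where "y = x / lam ^ nat qq"
    have "y \<in> K" unfolding y_def using assms lam by (simp add: K_divide K_pow)
    moreover have "y \<noteq> 0" unfolding y_def using assms lam by simp
    moreover have "w y = r" unfolding y_def using assms lam True wx by (simp add: wdiv wpow)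
    ultimately show ?thesis using that by blast
  next
    case False
    define y where "y = x * lam ^ nat (- qq)"
    have "y \<in> K" unfolding y_def using assms lam by (simp add: K_mult K_pow)
    moreover have "y \<noteq> 0" unfolding y_def using assms lam by simp
    moreover have "w y = r" unfolding y_def using assms lam False wx by (simp add: wmult wpow)
    ultimately show ?thesis using that by blast
  qed
  have "r = 0"
  proof (rule ccontr)
    assume "r \<noteq> 0"
    then have "Pr r" unfolding Pr_def using r y by auto
    then show False using e_facts(2) r by fastforce
  qed
  then show ?thesis using wx by simp
qed

lemma K_even: "e = 2 \<Longrightarrow> x \<in> K \<Longrightarrow> V 1 x \<Longrightarrow> V 2 x"
proof -
  assume "e = 2" "x \<in> K" "V 1 x"
  then show "V 2 x"
  proof (cases "x = 0")
    case False
    then have "2 dvd w x" using K_val_dvd \<open>x \<in> K\<close> \<open>e = 2\<close> by metis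
    moreover have "w x \<ge> 1" using \<open>V 1 x\<close> False by (simp add: vge_def)
    ultimately show ?thesis using False by (auto simp: vge_def elim!: dvdE)
  qed simp
qed

abbreviation Cg where "Cg \<equiv> {x. x \<noteq> 0 \<and> w x = 0 \<and> x * t x = 1}"

lemma C_grp_eq: "C_grp w t = Cg"
  unfolding C_grp_def val_units_def by auto

lemma C_filt_eq: "C_filt w t lam n = {x \<in> Cg. V (e * int n) (x - 1)}"
proof -
  have "(x = 1 \<or> v_lam w lam (x - 1) \<ge> real n) \<longleftrightarrow> V (e * int n) (x - 1)" for x
  proof (cases "x = 1")
    case False
    have "v_lam w lam (x - 1) \<ge> real n \<longleftrightarrow> real_of_int (w (x - 1)) / real_of_int e \<ge> real n"
      unfolding v_lam_def lam(3) ..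
    also have "\<dots> \<longleftrightarrow> real_of_int (w (x - 1)) \<ge> real n * real_of_int e"
      using e_pos by (simp add: le_divide_eq)
    also have "\<dots> \<longleftrightarrow> w (x - 1) \<ge> e * int n"
      by (metis mult.commute of_int_le_iff of_int_mult of_int_of_nat_eq)
    finally show ?thesis using False by (simp add: vge_def)
  qed (simp add: vge_def)
  then show ?thesis unfolding C_filt_def C_grp_eq by auto
qed

lemma Cg_mult: "x \<in> Cg \<Longrightarrow> y \<in> Cg \<Longrightarrow> x * y \<in> Cg"
  by (auto simp: wmult t_mult) (metis mult.assoc mult.left_commute mult_1_right)

lemma Cg_div: "x \<in> Cg \<Longrightarrow> y \<in> Cg \<Longrightarrow> y / x \<in> Cg"
  by (auto simp: wdiv t_divide)

lemma coset_eq: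
  assumes x: "x \<in> C_filt w t lam n"
  shows "(\<lambda>h. x * h) ` C_filt w t lam (Suc n) =
         cls (C_filt w t lam n) (\<lambda>x y. V (e * int (Suc n)) (x - y)) x"
proof -
  have xC: "x \<in> Cg" and x1: "V (e * int n) (x - 1)" using x unfolding C_filt_eq by auto
  have mono: "e * int n \<le> e * int (Suc n)" using e_pos by simp
  show ?thesis
  proof
    show "(\<lambda>h. x * h) ` C_filt w t lam (Suc n) \<subseteq> cls (C_filt w t lam n) (\<lambda>x y. V (e * int (Suc n)) (x - y)) x"
    proof
      fix y assume "y \<in> (\<lambda>h. x * h) ` C_filt w t lam (Suc n)"
      then obtain h where h: "h \<in> Cg" "V (e * int (Suc n)) (h - 1)" "y = x * h"
        unfolding C_filt_eq by auto
      have yC: "y \<in> Cg" using Cg_mult[OF xC h(1)] h(3) by simp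
      have e1: "y - 1 = x * (h - 1) + (x - 1)" using h(3) by (simp add: algebra_simps)
      have "V (e * int n) (x * (h - 1))" using V_mult_unit[of x] xC V_mono[OF h(2) mono] by auto
      then have "V (e * int n) (y - 1)" unfolding e1 using x1 by (rule V_add)
      moreover have "V (e * int (Suc n)) (x - y)"
      proof -
        have "x - y = - (x * (h - 1))" using h(3) by (simp add: algebra_simps)
        then show ?thesis using V_mult_unit[of x] xC h(2) by auto
      qed
      ultimately show "y \<in> cls (C_filt w t lam n) (\<lambda>x y. V (e * int (Suc n)) (x - y)) x"
        unfolding cls_def C_filt_eq using yC by auto
    qed
  next
    show "cls (C_filt w t lam n) (\<lambda>x y. V (e * int (Suc n)) (x - y)) x \<subseteq> (\<lambda>h. x * h) ` C_filt w t lam (Suc n)"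
    proof
      fix y assume "y \<in> cls (C_filt w t lam n) (\<lambda>x y. V (e * int (Suc n)) (x - y)) x"
      then have yC: "y \<in> Cg" and xy: "V (e * int (Suc n)) (x - y)" unfolding cls_def C_filt_eq by auto
      define h where "h = y / x"
      have hC: "h \<in> Cg" unfolding h_def using Cg_div[OF xC yC] .
      have "h - 1 = - ((x - y) / x)" unfolding h_def using xC by (simp add: field_simps)
      then have "V (e * int (Suc n)) (h - 1)" using V_div_unit[of x] xC xy by auto
      then have "h \<in> C_filt w t lam (Suc n)" unfolding C_filt_eq using hC by auto
      moreover have "y = x * h" unfolding h_def using xC by simp
      ultimately show "y \<in> (\<lambda>h. x * h) ` C_filt w t lam (Suc n)" by blast
    qed
  qed
qed

lemma quot_eq: "quot_cosets (C_filt w t lam n) (C_filt w t lam (Suc n)) =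
   classes (C_filt w t lam n) (\<lambda>x y. V (e * int (Suc n)) (x - y))"
  unfolding quot_cosets_def classes_def using coset_eq by (auto intro!: image_cong)

abbreviation OL where "OL \<equiv> {x. V 0 x}"
abbreviation RK where "RK \<equiv> {x. V 0 x \<and> t x = x}"
abbreviation E1 where "E1 \<equiv> (\<lambda>x y. V 1 (x - y))"

lemma residue_field_eq: "residue_field w A = classes (OL \<inter> A) E1"
proof -
  have vr: "val_ring w = OL" unfolding val_ring_def vge_def by auto
  have rel: "(x = y \<or> w (x - y) > 0) \<longleftrightarrow> E1 x y" for x y by (auto simp: vge_def)
  show ?thesis unfolding residue_field_def quotient_def classes_def cls_def vr rel
    by auto
qed

lemma RK_eq: "OL \<inter> K = RK" by (auto simp: inK)

lemma finL: "finite (classes OL E1)"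
  using finres residue_field_eq[of UNIV] by simp

lemma finK: "finite (classes RK E1)"
  using classes_le_inj[of RK E1 OL E1 "\<lambda>x. x", OF eqvV eqvV] finL by auto

end


lemma eqv_subset: "eqv B E \<Longrightarrow> A \<subseteq> B \<Longrightarrow> eqv A E"
  unfolding eqv_def by blast

lemma classes_split:
  assumes eq: "eqv A E" and S: "S \<subseteq> A" and sat: "\<And>x y. x \<in> S \<Longrightarrow> y \<in> A \<Longrightarrow> E x y \<Longrightarrow> y \<in> S"
    and finS: "finite (classes S E)" and finAS: "finite (classes (A - S) E)"
  shows "card (classes A E) = card (classes S E) + card (classes (A - S) E)"
proof -
  note D = eqv_D[OF eq]
  have c1: "cls A E x = cls S E x" if "x \<in> S" for x
  proof (rule set_eqI)
    fix y show "y \<in> cls A E x \<longleftrightarrow> y \<in> cls S E x"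
      unfolding cls_def using sat[OF that] S by blast
  qed
  have c2: "cls A E x = cls (A - S) E x" if "x \<in> A - S" for x
  proof -
    have "y \<notin> S" if "y \<in> A" "E x y" for y
    proof
      assume "y \<in> S"
      moreover have "E y x" using D(2)[of x y] \<open>x \<in> A - S\<close> that by blast
      ultimately have "x \<in> S" using sat \<open>x \<in> A - S\<close> by blast
      then show False using \<open>x \<in> A - S\<close> by blast
    qed
    then show ?thesis unfolding cls_def by blast
  qed
  have un: "classes A E = classes S E \<union> classes (A - S) E"
  proof -
    have "classes A E = cls A E ` S \<union> cls A E ` (A - S)" unfolding classes_def using S by blast
    also have "cls A E ` S = classes S E" unfolding classes_def using c1 by (auto intro!: image_cong)
    also have "cls A E ` (A - S) = classes (A - S) E" unfolding classes_def using c2 by (auto intro!: image_cong)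
    finally show ?thesis .
  qed
  have dis: "classes S E \<inter> classes (A - S) E = {}"
  proof (rule ccontr)
    assume "classes S E \<inter> classes (A - S) E \<noteq> {}"
    then obtain x y where xy: "x \<in> S" "y \<in> A - S" "cls S E x = cls (A - S) E y"
      unfolding classes_def by blast
    have "x \<in> cls S E x" unfolding cls_def using D(1) xy(1) S by blast
    then have "x \<in> A - S" using xy(3) unfolding cls_def by blast
    then show False using xy(1) by blast
  qed
  have f1: "finite (classes S E)" "finite (classes (A - S) E)" using finS finAS by auto
  show ?thesis unfolding un using card_Un_disjoint[OF f1 dis] .
qed

lemma classes_one:
  assumes eq: "eqv A E" and a: "a \<in> A" and all: "\<And>x. x \<in> A \<Longrightarrow> E a x"
  shows "card (classes A E) = 1"
proof -
  note D = eqv_D[OF eq]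
  have "cls A E x = A" if "x \<in> A" for x
  proof -
    have "E x y" if "y \<in> A" for y using D(3)[OF \<open>x \<in> A\<close> a \<open>y \<in> A\<close>] D(2)[OF a \<open>x \<in> A\<close>] all \<open>x \<in> A\<close> that by blast
    then show ?thesis unfolding cls_def by blast
  qed
  then have "classes A E = {A}" unfolding classes_def using a by blast
  then show ?thesis by simp
qed

lemma classes_fill:
  assumes eq: "eqv B E" and AB: "A \<subseteq> B" and fin: "finite (classes B E)"
    and le: "card (classes B E) \<le> card (classes A E)" and y: "y \<in> B"
  shows "\<exists>x\<in>A. E y x"
proof -
  have eqA: "eqv A E" using eqv_subset[OF eq AB] .
  have sub: "cls B E ` A \<subseteq> classes B E" unfolding classes_def using AB by blast
  then have finB: "finite (cls B E ` A)" using fin finite_subset by blast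
  have ce: "cls B E x = cls B E x' \<longleftrightarrow> cls A E x = cls A E x'" if "x \<in> A" "x' \<in> A" for x x'
    using cls_eq[OF eq] cls_eq[OF eqA] that AB by blast
  have "finite (cls A E ` A) \<and> card (cls A E ` A) \<le> card (cls B E ` A)"
    by (rule card_image_factor[OF finB]) (use ce in blast)
  then have "card (classes B E) \<le> card (cls B E ` A)" using le unfolding classes_def[of A] by linarith
  then have "cls B E ` A = classes B E" using card_seteq[OF fin sub] by blast
  then obtain x where x: "x \<in> A" "cls B E y = cls B E x" using y unfolding classes_def by blast
  then have "E y x" using cls_eq[OF eq y] AB by blast
  then show ?thesis using x by blast
qed

context LF begin

definition sub :: "'a set \<Rightarrow> bool" where
  "sub S \<longleftrightarrow> S \<subseteq> RK \<and> 0 \<in> S \<and> (\<forall>x\<in>S. \<forall>y\<in>S. x - y \<in> S) \<and> (\<forall>x\<in>S. \<forall>y\<in>RK. E1 x y \<longrightarrow> y \<in> S)"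

lemma RK_diff: "x \<in> RK \<Longrightarrow> y \<in> RK \<Longrightarrow> x - y \<in> RK" by (auto simp: V_diff t_diff)
lemma RK_add: "x \<in> RK \<Longrightarrow> y \<in> RK \<Longrightarrow> x + y \<in> RK" by (auto simp: V_add t_add)
lemma RK_mult: "x \<in> RK \<Longrightarrow> y \<in> RK \<Longrightarrow> x * y \<in> RK" using V_mult[of 0 x 0 y] by (auto simp: t_mult)
lemma RK_of_int: "of_int i \<in> RK" using V_of_int by simp
lemma RK_of_nat: "of_nat i \<in> RK" using V_of_nat by simp

lemma sub_D:
  assumes "sub S"
  shows "S \<subseteq> RK" "0 \<in> S" "x \<in> S \<Longrightarrow> y \<in> S \<Longrightarrow> x - y \<in> S"
    "x \<in> S \<Longrightarrow> y \<in> RK \<Longrightarrow> E1 x y \<Longrightarrow> y \<in> S"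
  using assms unfolding sub_def by blast+

lemma sub_neg: "sub S \<Longrightarrow> x \<in> S \<Longrightarrow> - x \<in> S"
  using sub_D(3)[of S 0 x] sub_D(2) by simp

lemma sub_add: "sub S \<Longrightarrow> x \<in> S \<Longrightarrow> y \<in> S \<Longrightarrow> x + y \<in> S"
  using sub_D(3)[of S x "- y"] sub_neg by simp

lemma sub_nat_mult: "sub S \<Longrightarrow> x \<in> S \<Longrightarrow> of_nat n * x \<in> S"
  by (induction n) (simp_all add: sub_D(2) sub_add algebra_simps)

lemma sub_int_mult: "sub S \<Longrightarrow> x \<in> S \<Longrightarrow> of_int i * x \<in> S"
proof (cases i rule: int_cases)
  case (nonneg n) then show "sub S \<Longrightarrow> x \<in> S \<Longrightarrow> of_int i * x \<in> S" using sub_nat_mult[of S x n] by simp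
next
  case (neg n)
  have "(of_int i :: 'a) = - of_nat (Suc n)" using neg by simp
  then have "of_int i * x = - (of_nat (Suc n) * x)" by (simp only: minus_mult_left)
  then show "sub S \<Longrightarrow> x \<in> S \<Longrightarrow> of_int i * x \<in> S"
    using sub_neg[of S "of_nat (Suc n) * x"] sub_nat_mult[of S x "Suc n"] by simp
qed

lemma V1_L: "V 1 (L * y)" if "V 0 y" for y
  using V_mult[OF _ that, of 1 L] wl by (simp add: vge_def)

lemma V1_Lint: "V 1 (of_int m * L * u)" if "V 0 u" for m u
proof -
  have "V 1 (L * (of_int m * u))" using V1_L[of "of_int m * u"] V_mult[OF V_of_int that] by simp
  then show ?thesis by (simp add: algebra_simps)
qed

definition ext :: "'a \<Rightarrow> 'a set \<Rightarrow> nat \<Rightarrow> 'a set" where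
  "ext u S k = {x \<in> RK. \<exists>j<k. x - of_nat j * u \<in> S}"

definition Tr :: "'a \<Rightarrow> 'a set \<Rightarrow> nat \<Rightarrow> 'a set" where
  "Tr u S j = {x \<in> RK. x - of_nat j * u \<in> S}"

lemma ext_sub: assumes S: "sub S" and u: "u \<in> RK" shows "sub (ext u S ell)"
proof -
  note D = sub_D[OF S]
  have ell0: "ell > 0" using ell_prime prime_gt_0_nat by blast
  have A1: "ext u S ell \<subseteq> RK" unfolding ext_def by blast
  have A2: "0 \<in> ext u S ell" unfolding ext_def using D(2) ell0 by auto
  have A3: "x - y \<in> ext u S ell" if x: "x \<in> ext u S ell" and y: "y \<in> ext u S ell" for x y
  proof -
    obtain j where j: "j < ell" "x - of_nat j * u \<in> S" "x \<in> RK" using x unfolding ext_def by blast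
    obtain j' where j': "j' < ell" "y - of_nat j' * u \<in> S" "y \<in> RK" using y unfolding ext_def by blast
    define r where "r = (int j - int j') mod int ell"
    define m where "m = (int j - int j') div int ell"
    have r: "0 \<le> r" "r < int ell" unfolding r_def using ell0 by auto
    have jr: "int j - int j' = m * int ell + r" unfolding r_def m_def by simp
    have z: "(x - y) - of_int (int j - int j') * u \<in> S"
      using D(3)[OF j(2) j'(2)] by (simp add: algebra_simps)
    have eq: "(x - y) - of_int r * u = ((x - y) - of_int (int j - int j') * u) + of_int m * L * u"
      unfolding jr by (simp add: algebra_simps)
    have "E1 ((x - y) - of_int (int j - int j') * u) ((x - y) - of_int r * u)"
    proof -
      have "V 1 (of_int m * L * u)" using V1_Lint u by simp
      moreover have "((x - y) - of_int (int j - int j') * u) - ((x - y) - of_int r * u) = - (of_int m * L * u)"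
        unfolding eq by simp
      ultimately show ?thesis using V_neg by metis
    qed
    moreover have "(x - y) - of_int r * u \<in> RK"
      using RK_diff[OF RK_diff[OF j(3) j'(3)] RK_mult[OF RK_of_int u]] .
    ultimately have "(x - y) - of_int r * u \<in> S" using D(4)[OF z] by blast
    moreover have "of_int r = (of_nat (nat r) :: 'a)" using r by simp
    ultimately have "x - y - of_nat (nat r) * u \<in> S" by simp
    moreover have "nat r < ell" using r by simp
    ultimately show ?thesis unfolding ext_def using RK_diff[OF j(3) j'(3)] by blast
  qed
  have A4: "y \<in> ext u S ell" if x: "x \<in> ext u S ell" and y: "y \<in> RK" and xy: "E1 x y" for x y
  proof -
    obtain j where j: "j < ell" "x - of_nat j * u \<in> S" using x unfolding ext_def by blast
    have "E1 (x - of_nat j * u) (y - of_nat j * u)" using xy by simp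
    then have "y - of_nat j * u \<in> S" using D(4)[OF j(2)] RK_diff[OF y RK_mult[OF RK_of_nat u]] by blast
    then show ?thesis unfolding ext_def using j y by blast
  qed
  show ?thesis unfolding sub_def
  proof (intro conjI ballI impI)
    show "ext u S ell \<subseteq> RK" by (rule A1)
    show "0 \<in> ext u S ell" by (rule A2)
    fix x y assume "x \<in> ext u S ell" "y \<in> ext u S ell" then show "x - y \<in> ext u S ell" by (rule A3)
  next
    fix x y assume "x \<in> ext u S ell" "y \<in> RK" "E1 x y" then show "y \<in> ext u S ell" by (rule A4)
  qed
qed

lemma Tr_sat: "sub S \<Longrightarrow> u \<in> RK \<Longrightarrow> x \<in> Tr u S j \<Longrightarrow> y \<in> RK \<Longrightarrow> E1 x y \<Longrightarrow> y \<in> Tr u S j"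
proof -
  assume S: "sub S" and u: "u \<in> RK" and x: "x \<in> Tr u S j" and y: "y \<in> RK" and xy: "E1 x y"
  have "E1 (x - of_nat j * u) (y - of_nat j * u)" using xy by simp
  then have "y - of_nat j * u \<in> S" using sub_D(4)[OF S] x RK_diff[OF y RK_mult[OF RK_of_nat u]]
    unfolding Tr_def by blast
  then show ?thesis unfolding Tr_def using y by blast
qed

lemma Tr_disj:
  assumes S: "sub S" and u: "u \<in> RK" "u \<notin> S" and ij: "i < j" "j < ell"
  shows "Tr u S i \<inter> Tr u S j = {}"
proof (rule ccontr)
  assume "Tr u S i \<inter> Tr u S j \<noteq> {}"
  then obtain x where x: "x - of_nat i * u \<in> S" "x - of_nat j * u \<in> S" unfolding Tr_def by blast
  have "(x - of_nat i * u) - (x - of_nat j * u) = of_nat (j - i) * u"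
    using ij by (simp add: of_nat_diff algebra_simps)
  then have d: "of_nat (j - i) * u \<in> S" using sub_D(3)[OF S x] by simp
  have "\<not> ell dvd (j - i)" using ij by (simp add: nat_dvd_not_less)
  then have "coprime ell (j - i)" using prime_imp_coprime[OF ell_prime] by blast
  then have "gcd ell (j - i) = 1" by (simp add: coprime_iff_gcd_eq_1)
  then have "gcd (int ell) (int (j - i)) = 1" by simp
  then obtain a b where ab: "a * int ell + b * int (j - i) = 1" using bezout_int[of "int ell" "int (j - i)"] by auto
  define c where "c = b"
  define m where "m = - a"
  have m: "int (j - i) * c = 1 + m * int ell" using ab unfolding c_def m_def by (simp add: algebra_simps)
  have cd: "of_int c * (of_nat (j - i) * u) \<in> S" using sub_int_mult[OF S d] .
  have "of_int c * (of_nat (j - i) * u) = u + of_int m * L * u"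
  proof -
    have "of_int c * (of_nat (j - i) * u) = of_int (int (j - i) * c) * (u::'a)" by (simp add: algebra_simps)
    also have "\<dots> = u + of_int m * L * u" unfolding m by (simp add: algebra_simps)
    finally show ?thesis .
  qed
  moreover have "V 1 (of_int m * L * u)" using V1_Lint u by simp
  ultimately have "E1 (of_int c * (of_nat (j - i) * u)) u" using V_neg by simp
  then have "u \<in> S" using sub_D(4)[OF S cd u(1)] by blast
  then show False using u by blast
qed

lemma Tr_card: assumes S: "sub S" and u: "u \<in> RK"
  shows "card (classes (Tr u S j) E1) = card (classes S E1)"
proof -
  have "card (classes (Tr u S j) E1) = card (classes S E1)"
  proof (rule classes_eq(2)[of S E1 "Tr u S j" E1 "\<lambda>x. x + of_nat j * u", OF eqvV eqvV])
    show "x + of_nat j * u \<in> Tr u S j" if "x \<in> S" for x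
      unfolding Tr_def using that sub_D(1)[OF S] RK_add[OF _ RK_mult[OF RK_of_nat u]] by auto
    show "E1 x y \<longleftrightarrow> E1 (x + of_nat j * u) (y + of_nat j * u)" for x y by simp
    show "\<exists>x\<in>S. E1 y (x + of_nat j * u)" if "y \<in> Tr u S j" for y
      using that unfolding Tr_def by (intro bexI[of _ "y - of_nat j * u"]) auto
  qed
  then show ?thesis .
qed

lemma fin_sub: "A \<subseteq> RK \<Longrightarrow> finite (classes A E1) \<and> card (classes A E1) \<le> card (classes RK E1)"
  using classes_le_inj[of A E1 RK E1 "\<lambda>x. x", OF eqvV eqvV] finK by auto

lemma ext_count:
  assumes S: "sub S" and u: "u \<in> RK" "u \<notin> S" and k: "k \<le> ell"
  shows "card (classes (ext u S k) E1) = k * card (classes S E1)"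
  using k
proof (induction k)
  case 0
  have "ext u S 0 = {}" unfolding ext_def by auto
  then show ?case by (simp add: classes_def)
next
  case (Suc k)
  have IH: "card (classes (ext u S k) E1) = k * card (classes S E1)"
    using Suc by auto
  have un: "ext u S (Suc k) = Tr u S k \<union> ext u S k"
  proof (rule set_eqI)
    fix x show "x \<in> ext u S (Suc k) \<longleftrightarrow> x \<in> Tr u S k \<union> ext u S k"
      unfolding ext_def Tr_def by (auto simp: less_Suc_eq)
  qed
  have dis: "Tr u S k \<inter> ext u S k = {}"
  proof -
    have "Tr u S k \<inter> Tr u S j = {}" if "j < k" for j
      using Tr_disj[OF S u that] Suc.prems by (simp add: Int_commute)
    then show ?thesis unfolding ext_def Tr_def by blast
  qed
  have dif: "ext u S (Suc k) - Tr u S k = ext u S k" using un dis by blast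
  have sR: "ext u S (Suc k) \<subseteq> RK" unfolding ext_def by blast
  have "card (classes (ext u S (Suc k)) E1) = card (classes (Tr u S k) E1) + card (classes (ext u S (Suc k) - Tr u S k) E1)"
  proof (rule classes_split[OF eqvV])
    show "Tr u S k \<subseteq> ext u S (Suc k)" using un by blast
    show "y \<in> Tr u S k" if "x \<in> Tr u S k" "y \<in> ext u S (Suc k)" "E1 x y" for x y
      using Tr_sat[OF S u(1) that(1) _ that(3)] that(2) sR by blast
    show "finite (classes (Tr u S k) E1)" using fin_sub[of "Tr u S k"] unfolding Tr_def by blast
    show "finite (classes (ext u S (Suc k) - Tr u S k) E1)" using fin_sub[of "ext u S (Suc k) - Tr u S k"] sR by blast
  qed
  then show ?case unfolding dif IH Tr_card[OF S u(1)] by simp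
qed

lemma S0_sub: "sub {x \<in> RK. V 1 x}"
  unfolding sub_def
proof (intro conjI ballI impI)
  show "0 \<in> {x \<in> RK. V 1 x}" by simp
  fix x y assume "x \<in> {x \<in> RK. V 1 x}" "y \<in> {x \<in> RK. V 1 x}"
  then show "x - y \<in> {x \<in> RK. V 1 x}" using RK_diff V_diff by blast
next
  fix x y assume x: "x \<in> {x \<in> RK. V 1 x}" and y: "y \<in> RK" and "E1 x y"
  then have "V 1 (x - (x - y))" using V_diff by blast
  then show "y \<in> {x \<in> RK. V 1 x}" using y by simp
qed auto

lemma S0_card: "card (classes {x \<in> RK. V 1 x} E1) = 1"
  by (rule classes_one[OF eqvV, of 0]) (auto simp: V_diff)

lemma q_power_aux:
  "sub S \<Longrightarrow> card (classes S E1) = ell ^ j \<Longrightarrow> \<exists>f. card (classes RK E1) = ell ^ f"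
proof (induction "card (classes RK E1) - card (classes S E1)" arbitrary: S j rule: less_induct)
  case less
  show ?case
  proof (cases "S = RK")
    case True then show ?thesis using less.prems by blast
  next
    case False
    then obtain u where u: "u \<in> RK" "u \<notin> S" using sub_D(1)[OF less.prems(1)] by blast
    define S' where "S' = ext u S ell"
    have sub': "sub S'" unfolding S'_def using ext_sub less.prems(1) u(1) by blast
    have c': "card (classes S' E1) = ell ^ Suc j"
      unfolding S'_def using ext_count[OF less.prems(1) u le_refl] less.prems(2) by simp
    have le: "card (classes S' E1) \<le> card (classes RK E1)" using fin_sub sub_D(1)[OF sub'] by blast
    have ell1: "ell > 1" using ell_prime prime_gt_1_nat by blast
    have "ell ^ j < ell ^ Suc j" using ell1 by simp
    then have "card (classes RK E1) - card (classes S' E1) < card (classes RK E1) - card (classes S E1)"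
      using le c' less.prems(2) by linarith
    then show ?thesis using less.hyps sub' c' by blast
  qed
qed

lemma q_power: "\<exists>f. card (classes RK E1) = ell ^ f"
  using q_power_aux[OF S0_sub, of 0] S0_card by simp

abbreviation q where "q \<equiv> card (classes RK E1)"

lemma q_inertia: "q = ell ^ inertia_degree ell w K"
proof -
  obtain f where f: "q = ell ^ f" using q_power by blast
  have ell1: "ell > 1" using ell_prime prime_gt_1_nat by blast
  have "inertia_degree ell w K = f"
    unfolding inertia_degree_def residue_field_eq RK_eq
  proof (rule the_equality)
    show "q = ell ^ f" by (rule f)
    fix g assume "q = ell ^ g"
    then show "g = f" using f ell1 by (metis power_inject_exp)
  qed
  then show ?thesis using f by simp
qed

end


context LF begin

lemma t_numeral[simp]: "t (numeral n) = numeral n" by (metis of_nat_numeral t_of_nat)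

lemma OL_mult: "V 0 x \<Longrightarrow> V 0 y \<Longrightarrow> V 0 (x * y)" using V_mult[of 0 x 0 y] by simp

lemma w2_unit: "ell \<noteq> 2 \<Longrightarrow> w (2::'a) = 0"
proof -
  assume "ell \<noteq> 2"
  then have "\<not> ell dvd 2" using dvd_imp_le[of ell 2] prime_ge_2_nat[OF ell_prime] by auto
  then show ?thesis using w_of_nat_unit[of 2] by simp
qed

lemma two_V1: "ell = 2 \<Longrightarrow> V 1 (2::'a)" using wl by (simp add: vge_def)

lemma avg_lift:
  assumes "ell \<noteq> 2" "V 0 x" "V 1 (x - t x)"
  shows "(x + t x) / 2 \<in> RK" "V 1 (x - (x + t x) / 2)"
proof -
  have w2: "w (2::'a) = 0" using w2_unit assms(1) .
  have "V 0 (x + t x)" using assms(2) t_V V_add by blast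
  then show "(x + t x) / 2 \<in> RK" using V_div_unit[OF w2] by (simp add: t_divide t_add add.commute)
  have eqd: "x - (x + t x) / 2 = (x - t x) / 2" by (simp add: field_simps)
  show "V 1 (x - (x + t x) / 2)" using V_div_unit[OF w2, of 1 "x - t x"] assms(3) unfolding eqd by simp
qed

lemma ram_trivial:
  assumes e2: "e = 2" and p: "p \<noteq> 0" "w p = 1"
  shows "V 1 (t p / p + 1)" "\<And>c. V 0 c \<Longrightarrow> V 1 (c - t c)"
proof -
  define eps where "eps = t p / p"
  have tp: "t p = eps * p" unfolding eps_def using p by simp
  have key: "V 1 (c + t c * eps)" if c: "V 0 c" for c
  proof -
    define z where "z = c * p"
    have zK: "z + t z \<in> K" using K_trace by blast
    have weps: "w eps = 0" unfolding eps_def using p by (simp add: wdiv t_w)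
    have ceps: "V 0 (c + t c * eps)" using V_add[OF c OL_mult[OF t_V[THEN iffD2, OF c]]] weps
      by (simp add: vge_def)
    have eq: "z + t z = (c + t c * eps) * p" unfolding z_def using tp by (simp add: t_mult algebra_simps)
    have "V 1 (z + t z)" unfolding eq using V_mult[OF ceps, of 1 p] p by (simp add: vge_def)
    then have "V 2 (z + t z)" using K_even[OF e2 zK] by blast
    then have "V (2 - w p) ((z + t z) / p)" using V_divide p by blast
    then show ?thesis using eq p by simp
  qed
  have one: "V 0 (1::'a)" by (simp add: vge_def)
  have k1: "V 1 (1 + eps)" using key[OF one] by simp
  then show "V 1 (t p / p + 1)" by (simp add: eps_def add.commute)
  fix c assume c: "V 0 c"
  have eq: "c - t c = (c + t c * eps) - t c * (1 + eps)" by (simp add: algebra_simps)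
  have "V 1 (t c * (1 + eps))"
    using V_mult[OF t_V[THEN iffD2, OF c] k1] by simp
  then show "V 1 (c - t c)" unfolding eq by (rule V_diff[OF key[OF c]])
qed

lemma exists_p: "\<exists>p. p \<noteq> 0 \<and> w p = 1" using unif_ex .

lemma unram_nontrivial:
  assumes e1: "e = 1" and odd: "ell \<noteq> 2"
  shows "\<exists>\<theta>. V 0 \<theta> \<and> \<not> V 1 (\<theta> - t \<theta>)"
proof (rule ccontr)
  assume "\<not> ?thesis"
  then have triv: "V 1 (x - t x)" if "V 0 x" for x using that by blast
  have lift: "\<exists>k\<in>K. V 1 (x - k)" if "V 0 x" for x
  proof -
    note A = avg_lift[OF odd that triv[OF that]]
    have "(x + t x) / 2 \<in> K" using A(1) by (simp add: inK)
    then show ?thesis using A(2) by blast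
  qed
  have wl1: "w lam = 1" using lam(3) e1 by simp
  have approx: "\<exists>k\<in>K. V (int N) (x - k)" if x: "V 0 x" for x N
  proof (induction N)
    case 0 then show ?case using x by (intro bexI[of _ 0]) (auto simp: inK)
  next
    case (Suc N)
    then obtain k where k: "k \<in> K" "V (int N) (x - k)" by blast
    define y where "y = (x - k) / lam ^ N"
    have lN: "lam ^ N \<noteq> 0" "w (lam ^ N) = int N" using lam(2) wl1 by (auto simp: wpow)
    have y0: "V 0 y" unfolding y_def using V_divide[OF k(2) lN(1)] lN(2) by simp
    obtain k' where k': "k' \<in> K" "V 1 (y - k')" using lift[OF y0] by blast
    have "x - (k + lam ^ N * k') = lam ^ N * (y - k')" unfolding y_def using lN(1) by (simp add: field_simps)
    moreover have "V (int N + 1) (lam ^ N * (y - k'))" using V_mult[OF _ k'(2), of "int N" "lam ^ N"] lN by (simp add: vge_def)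
    moreover have "k + lam ^ N * k' \<in> K" using k(1) k'(1) lam(1) by (simp add: K_add K_mult K_pow)
    ultimately show ?case by (intro bexI[of _ "k + lam ^ N * k'"]) (auto simp: add.commute)
  qed
  have fixO: "t x = x" if x: "V 0 x" for x
  proof -
    have "V (int N) (t x - x)" for N
    proof -
      obtain k where k: "k \<in> K" "V (int N) (x - k)" using approx[OF x] by blast
      have eq: "t x - x = t (x - k) - (x - k)" using k(1) by (simp add: t_diff inK)
      have "V (int N) (t (x - k))" using t_V k(2) by blast
      then show ?thesis unfolding eq using k(2) by (rule V_diff)
    qed
    then have "V Nn (t x - x)" for Nn
    proof -
      assume "\<And>N. V (int N) (t x - x)"
      then have a: "V (int (nat Nn)) (t x - x)" .
      have "Nn \<le> int (nat Nn)" by simp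
      then show ?thesis using V_mono[OF a] by blast
    qed
    then show ?thesis using V_all_zero by (metis eq_iff_diff_eq_0)
  qed
  have "t x = x" for x
  proof (cases "V 0 x")
    case True then show ?thesis using fixO by blast
  next
    case False
    then have "x \<noteq> 0" "w x < 0" by (auto simp: vge_def)
    then have "V 0 (inverse x)" by (simp add: vge_def winv)
    then have "t (inverse x) = inverse x" using fixO by blast
    then show ?thesis by (simp add: t_inverse)
  qed
  then have "t = id" by auto
  then show False using nid by blast
qed

end


context LF begin

lemma V_mult_iff: "y \<noteq> 0 \<Longrightarrow> V k (y * z) \<longleftrightarrow> V (k - w y) z"
  by (cases "z = 0") (auto simp: vge_def wmult)

lemma V_div_iff: "y \<noteq> 0 \<Longrightarrow> V k (z / y) \<longleftrightarrow> V (k + w y) z"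
  by (cases "z = 0") (auto simp: vge_def wdiv)

lemma unitI: "x \<noteq> 0 \<Longrightarrow> V 0 x \<Longrightarrow> \<not> V 1 x \<Longrightarrow> w x = 0"
  by (simp add: vge_def)

lemma Cg_O: "x \<in> Cg \<Longrightarrow> V 0 x" by (simp add: vge_def)

lemma C0_eq: "C_filt w t lam 0 = Cg"
proof -
  have "V 0 (x - 1)" if "x \<in> Cg" for x
    using V_diff[OF Cg_O[OF that], of 1] by (simp add: vge_def)
  then show ?thesis unfolding C_filt_eq by auto
qed

lemma fin_L: "A \<subseteq> OL \<Longrightarrow> finite (classes A E1)"
  using classes_le_inj[of A E1 OL E1 "\<lambda>x. x", OF eqvV eqvV] finL by auto

lemma eqv_sub1: "eqv A (\<lambda>x y. V k (x - y))" by (rule eqvV)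

lemma count_unram:
  assumes odd: "ell \<noteq> 2" and e1: "e = 1"
  shows "card (classes Cg E1) = q + 1"
proof -
  have w2: "w (2::'a) = 0" using w2_unit odd .
  have two0: "(2::'a) \<noteq> 0" by simp
  obtain th0 where th0: "V 0 th0" "\<not> V 1 (th0 - t th0)" using unram_nontrivial[OF e1 odd] by blast
  define th where "th = th0 - t th0"
  have th0': "th \<noteq> 0" "w th = 0" "t th = - th"
    unfolding th_def using th0 V_diff[OF th0(1) t_V[THEN iffD2, OF th0(1)]]
    by (auto simp: vge_def t_diff)
  have den: "a - th \<noteq> 0 \<and> w (a - th) = 0 \<and> a + th \<noteq> 0 \<and> w (a + th) = 0" if a: "a \<in> RK" for a
  proof -
    have aO: "V 0 a" "t a = a" using a by auto
    have thO: "V 0 th" using th0' by (simp add: vge_def)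
    have n2: "\<not> V 1 (2 * th)" using w2 th0' by (simp add: vge_def wmult)
    have "\<not> V 1 (a - th)"
    proof
      assume "V 1 (a - th)"
      moreover have "V 1 (a + th)" using t_V[of 1 "a - th"] \<open>V 1 (a - th)\<close> aO th0' by (simp add: t_diff)
      ultimately have "V 1 ((a + th) - (a - th))" using V_diff by blast
      then show False using n2 by simp
    qed
    moreover have "\<not> V 1 (a + th)"
    proof
      assume "V 1 (a + th)"
      moreover have "V 1 (a - th)" using t_V[of 1 "a + th"] \<open>V 1 (a + th)\<close> aO th0' by (simp add: t_add)
      ultimately have "V 1 ((a + th) - (a - th))" using V_diff by blast
      then show False using n2 by simp
    qed
    ultimately show ?thesis using V_diff[OF aO(1) thO] V_add[OF aO(1) thO] by (auto simp: vge_def)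
  qed
  define ca where "ca a = (a + th) / (a - th)" for a
  have ca_C: "ca a \<in> Cg" if a: "a \<in> RK" for a
  proof -
    have ta: "t a = a" using a by simp
    have tca: "t (ca a) = (a - th) / (a + th)" unfolding ca_def using ta th0' by (simp add: t_divide t_add t_diff)
    show ?thesis using den[OF a] tca unfolding ca_def by (auto simp: wdiv)
  qed
  have ca1: "\<not> V 1 (ca a - 1)" if a: "a \<in> RK" for a
  proof -
    have "ca a - 1 = (2 * th) / (a - th)" unfolding ca_def using den[OF a] by (simp add: field_simps)
    then show ?thesis using den[OF a] th0' w2 by (simp add: vge_def wdiv wmult)
  qed
  have cadiff: "V 1 (ca a - ca b) \<longleftrightarrow> V 1 (a - b)" if a: "a \<in> RK" and b: "b \<in> RK" for a b
  proof -
    have "ca a - ca b = (2 * th) * (b - a) / ((a - th) * (b - th))"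
      unfolding ca_def using den[OF a] den[OF b] by (simp add: field_simps)
    then have "V 1 (ca a - ca b) \<longleftrightarrow> V 1 ((2 * th) * (b - a))"
      using V_div_unit[of "(a - th) * (b - th)"] den[OF a] den[OF b] by (simp add: wmult)
    also have "\<dots> \<longleftrightarrow> V 1 (b - a)" using V_mult_unit[of "2 * th"] w2 th0' by (simp add: wmult)
    finally show ?thesis using V_diff_sym by blast
  qed
  define C1 where "C1 = {c \<in> Cg. V 1 (c - 1)}"
  have split: "card (classes Cg E1) = card (classes C1 E1) + card (classes (Cg - C1) E1)"
  proof (rule classes_split[OF eqvV])
    show "C1 \<subseteq> Cg" unfolding C1_def by blast
    show "y \<in> C1" if "x \<in> C1" "y \<in> Cg" "E1 x y" for x y
    proof -
      have "V 1 ((x - 1) - (x - y))" using that V_diff unfolding C1_def by blast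
      then show ?thesis using that(2) unfolding C1_def by simp
    qed
    show "finite (classes C1 E1)" using fin_L[of C1] Cg_O unfolding C1_def by blast
    show "finite (classes (Cg - C1) E1)" using fin_L[of "Cg - C1"] Cg_O by blast
  qed
  have c1: "card (classes C1 E1) = 1"
  proof (rule classes_one[OF eqvV, of 1])
    show "1 \<in> C1" unfolding C1_def by (simp add: vge_def)
    fix x assume "x \<in> C1" then show "E1 1 x" unfolding C1_def using V_diff_sym[of 1 x 1] by simp
  qed
  have c2: "card (classes (Cg - C1) E1) = q"
  proof (rule classes_eq(2)[of RK E1 "Cg - C1" E1 ca, OF eqvV eqvV])
    show "ca x \<in> Cg - C1" if "x \<in> RK" for x using ca_C[OF that] ca1[OF that] unfolding C1_def by blast
    show "E1 x y \<longleftrightarrow> E1 (ca x) (ca y)" if "x \<in> RK" "y \<in> RK" for x y using cadiff[OF that] by simp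
    show "\<exists>x\<in>RK. E1 y (ca x)" if y: "y \<in> Cg - C1" for y
    proof -
      have yC: "y \<in> Cg" and y1: "\<not> V 1 (y - 1)" using y unfolding C1_def by auto
      have y0: "y \<noteq> 0" and yn1: "y - 1 \<noteq> 0" using yC y1 by (auto simp: vge_def)
      have tyi: "t y = 1 / y" using yC by (simp add: field_simps)
      define a where "a = th * (y + 1) / (y - 1)"
      have wy1: "w (y - 1) = 0" using unitI[OF yn1 _ y1] V_diff[OF Cg_O[OF yC], of 1] by (simp add: vge_def)
      have "V 0 (y + 1)" using V_add[OF Cg_O[OF yC], of 1] by (simp add: vge_def)
      then have "V 0 (th * (y + 1))" using V_mult[of 0 th 0 "y + 1"] th0' by (simp add: vge_def)
      then have aO: "V 0 a" unfolding a_def using V_div_unit[OF wy1 yn1] by simp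
      have "t a = - th * (1 / y + 1) / (1 / y - 1)" unfolding a_def using th0' tyi by (simp add: t_divide t_mult t_add t_diff)
      also have "\<dots> = a" unfolding a_def using y0 yn1 by (simp add: field_simps)
      finally have ta: "t a = a" .
      have "ca a = y" unfolding ca_def a_def using y0 yn1 th0'(1)
        by (simp add: field_simps)
      then show ?thesis using aO ta by (intro bexI[of _ a]) (auto simp: vge_def)
    qed
  qed
  show ?thesis using split c1 c2 by simp
qed

end


context LF begin

abbreviation E2v where "E2v \<equiv> (\<lambda>x y. V 2 (x - y))"

lemma count_ram:
  assumes odd: "ell \<noteq> 2" and e2: "e = 2"
  shows "card (classes Cg E2v) = 2 * q"
proof -
  have w2: "w (2::'a) = 0" using w2_unit odd .
  obtain p where p: "p \<noteq> 0" "w p = 1" using unif_ex by blast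
  note RT = ram_trivial[OF e2 p]
  define eps where "eps = t p / p"
  define pi where "pi = p - t p"
  have pi_eq: "pi = p * (1 - eps)" unfolding pi_def eps_def using p by (simp add: field_simps)
  have e1: "V 1 (eps + 1)" using RT(1) unfolding eps_def .
  have w1e: "1 - eps \<noteq> 0 \<and> w (1 - eps) = 0"
  proof -
    have eq: "1 - eps = 2 + - (eps + 1)" by simp
    have "V 1 (- (eps + 1))" using e1 V_neg by blast
    then have "2 + - (eps + 1) \<noteq> 0 \<and> w (2 + - (eps + 1)) = w (2::'a)"
      by (rule V_strict[of 2 1, rotated 2]) (use w2 in simp_all)
    then show ?thesis unfolding eq using w2 by simp
  qed
  have tpi: "t pi = - pi" unfolding pi_def by (simp add: t_diff)
  have pi0: "pi \<noteq> 0" "w pi = 1" "t pi = - pi" using p w1e tpi unfolding pi_eq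
    by (auto simp: wmult)
  define xa where "xa a = (1 + a * pi) / (1 - a * pi)" for a
  have u: "1 - a * pi \<noteq> 0 \<and> w (1 - a * pi) = 0 \<and> 1 + a * pi \<noteq> 0 \<and> w (1 + a * pi) = 0" if a: "a \<in> RK" for a
  proof -
    have "V 1 (a * pi)" using V_mult[of 0 a 1 pi] a pi0 by (simp add: vge_def)
    then show ?thesis using V_strict[of 1 1 "- (a * pi)"] V_strict[of 1 1 "a * pi"] by (auto simp: vge_def)
  qed
  have xa_C: "xa a \<in> Cg" if a: "a \<in> RK" for a
  proof -
    have ta: "t a = a" using a by simp
    have "t (xa a) = (1 - a * pi) / (1 + a * pi)" unfolding xa_def using ta pi0 by (simp add: t_divide t_add t_diff t_mult)
    then show ?thesis using u[OF a] unfolding xa_def by (auto simp: wdiv)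
  qed
  have xa1: "V 1 (xa a - 1)" if a: "a \<in> RK" for a
  proof -
    have "xa a - 1 = (2 * a * pi) / (1 - a * pi)" unfolding xa_def using u[OF a] by (simp add: field_simps)
    moreover have "V 1 (2 * a * pi)" using V_mult[of 0 "2 * a" 1 pi] a pi0 V_mult[of 0 2 0 a] w2
      by (simp add: vge_def)
    ultimately show ?thesis using V_div_unit[of "1 - a * pi"] u[OF a] by simp
  qed
  have xadiff: "E2v (xa a) (xa b) \<longleftrightarrow> E1 a b" if a: "a \<in> RK" and b: "b \<in> RK" for a b
  proof -
    have "xa a - xa b = (2 * pi) * (a - b) / ((1 - a * pi) * (1 - b * pi))"
      unfolding xa_def using u[OF a] u[OF b] by (simp add: field_simps)
    then have "V 2 (xa a - xa b) \<longleftrightarrow> V 2 ((2 * pi) * (a - b))"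
      using V_div_unit[of "(1 - a * pi) * (1 - b * pi)"] u[OF a] u[OF b] by (simp add: wmult)
    also have "\<dots> \<longleftrightarrow> V 1 (a - b)" using V_mult_iff[of "2 * pi" 2 "a - b"] w2 pi0 by (simp add: wmult)
    finally show ?thesis .
  qed
  define Cp where "Cp = {c \<in> Cg. V 1 (c - 1)}"
  define Cm where "Cm = {c \<in> Cg. V 1 (c + 1)}"
  have not2: "\<not> V 1 (2::'a)" using w2 by (simp add: vge_def)
  have cover: "V 1 (c - 1) \<or> V 1 (c + 1)" if c: "c \<in> Cg" for c
  proof (rule ccontr)
    assume n: "\<not> (V 1 (c - 1) \<or> V 1 (c + 1))"
    have cO: "V 0 c" using Cg_O[OF c] .
    have a: "c - 1 \<noteq> 0" "w (c - 1) = 0" using n V_diff[OF cO, of 1] by (auto simp: vge_def)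
    have b: "c + 1 \<noteq> 0" "w (c + 1) = 0" using n V_add[OF cO, of 1] by (auto simp: vge_def)
    have "(c - 1) * (c + 1) = c * (c - t c)" using c by (simp add: algebra_simps power2_eq_square)
    moreover have "V 1 (c * (c - t c))" using V_mult[OF cO RT(2)[OF cO]] by simp
    ultimately have "V 1 ((c - 1) * (c + 1))" by simp
    then show False using a b by (simp add: vge_def wmult)
  qed
  have dif: "Cg - Cp = Cm"
  proof -
    have "\<not> (V 1 (c - 1) \<and> V 1 (c + 1))" for c :: 'a
    proof
      assume "V 1 (c - 1) \<and> V 1 (c + 1)"
      then have "V 1 ((c + 1) - (c - 1))" using V_diff by blast
      then show False using not2 by simp
    qed
    then show ?thesis unfolding Cp_def Cm_def using cover by blast
  qed
  have cp: "finite (classes Cp E2v) \<and> card (classes Cp E2v) = q"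
  proof -
    have A: "xa x \<in> Cp" if "x \<in> RK" for x using xa_C[OF that] xa1[OF that] unfolding Cp_def by blast
    have B: "E1 x y \<longleftrightarrow> E2v (xa x) (xa y)" if "x \<in> RK" "y \<in> RK" for x y using xadiff[OF that] by simp
    have Cc: "\<exists>x\<in>RK. E2v y (xa x)" if y: "y \<in> Cp" for y
    proof -
      have yC: "y \<in> Cg" and y1: "V 1 (y - 1)" using y unfolding Cp_def by auto
      have wpi2: "w (2 * pi) = 1" "2 * pi \<noteq> 0" using w2 pi0 by (auto simp: wmult)
      define b where "b = (y - 1) / (2 * pi)"
      have bO: "V 0 b" unfolding b_def using V_divide[OF y1 wpi2(2)] wpi2 by simp
      define a where "a = (b + t b) / 2"
      have aR: "a \<in> RK" and ab: "V 1 (b - a)" unfolding a_def using avg_lift[OF odd bO RT(2)[OF bO]] by auto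
      have aO: "V 0 a" using aR by simp
      have "y - xa a = (2 * pi) * ((b - a) - a * b * pi) / (1 - a * pi)"
        unfolding xa_def b_def using u[OF aR] wpi2 by (simp add: field_simps)
      moreover have "V 1 ((b - a) - a * b * pi)"
      proof -
        have "V (0 + 1) (a * b * pi)" using V_mult[OF OL_mult[OF aO bO], of 1 pi] pi0 by (simp add: vge_def)
        then show ?thesis using V_diff[OF ab] by simp
      qed
      ultimately have "V 2 (y - xa a)"
        using V_div_unit[of "1 - a * pi"] u[OF aR] V_mult_iff[of "2 * pi" 2] wpi2 by simp
      then show ?thesis using aR by blast
    qed
    show ?thesis
      using classes_eq[of RK E1 Cp E2v xa, OF eqvV eqvV A B Cc] finK by simp
  qed
  have cm: "finite (classes Cm E2v) \<and> card (classes Cm E2v) = card (classes Cp E2v)"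
  proof -
    have A: "- x \<in> Cm" if x: "x \<in> Cp" for x
    proof -
      have xC: "x \<in> Cg" "V 1 (x - 1)" using x unfolding Cp_def by auto
      have "- x + 1 = - (x - 1)" by simp
      then have "V 1 (- x + 1)" using xC(2) V_neg by metis
      moreover have "- x \<in> Cg" using xC(1) by (auto simp: t_neg)
      ultimately show ?thesis unfolding Cm_def by blast
    qed
    have B: "E2v x y \<longleftrightarrow> E2v (- x) (- y)" for x y using V_neg[of 2 "x - y"] by simp
    have Cc: "\<exists>x\<in>Cp. E2v y (- x)" if y: "y \<in> Cm" for y
    proof -
      have yC: "y \<in> Cg" "V 1 (y + 1)" using y unfolding Cm_def by auto
      have "- y - 1 = - (y + 1)" by simp
      then have "V 1 (- y - 1)" using yC(2) V_neg by metis
      moreover have "- y \<in> Cg" using yC(1) by (auto simp: t_neg)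
      ultimately have "- y \<in> Cp" unfolding Cp_def by blast
      then show ?thesis by (intro bexI[of _ "- y"]) (simp_all add: vge_def)
    qed
    show ?thesis using classes_eq[of Cp E2v Cm E2v uminus, OF eqvV eqvV A B Cc] cp by simp
  qed
  have "card (classes Cg E2v) = card (classes Cp E2v) + card (classes (Cg - Cp) E2v)"
  proof (rule classes_split[OF eqvV])
    show "Cp \<subseteq> Cg" unfolding Cp_def by blast
    show "y \<in> Cp" if "x \<in> Cp" "y \<in> Cg" "E2v x y" for x y
    proof -
      have "V 1 ((x - 1) - (x - y))" using that V_diff V_mono[of 2 "x - y" 1] unfolding Cp_def by fastforce
      then show ?thesis using that(2) unfolding Cp_def by simp
    qed
    show "finite (classes Cp E2v)" using cp by blast
    show "finite (classes (Cg - Cp) E2v)" using cm dif by simp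
  qed
  then show ?thesis using cp cm dif by simp
qed

end


context LF begin

lemma kL_le_sq_basis:
  assumes th: "V 0 th" "\<not> V 1 (th - t th)"
  shows "card (classes OL E1) \<le> q ^ 2"
proof -
  define d where "d = th - t th"
  have d: "d \<noteq> 0" "w d = 0" unfolding d_def using th V_diff[OF th(1) t_V[THEN iffD2, OF th(1)]]
    by (auto simp: vge_def)
  have td: "t d = - d" unfolding d_def by (simp add: t_diff)
  define f where "f p = fst p + snd p * th" for p
  have "finite (classes OL E1) \<and> card (classes OL E1) \<le> card (classes (RK \<times> RK) (E2 E1))"
  proof (rule classes_le_surj[OF eqv_E2[OF eqvV] eqvV])
    show "f x \<in> OL" if "x \<in> RK \<times> RK" for x
      using that th(1) V_add V_mult[of 0 "snd x" 0 th] unfolding f_def by (auto simp: mem_Times_iff)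
    show "E1 (f x) (f y)" if "x \<in> RK \<times> RK" "y \<in> RK \<times> RK" "E2 E1 x y" for x y
    proof -
      have "f x - f y = (fst x - fst y) + (snd x - snd y) * th" unfolding f_def by (simp add: algebra_simps)
      moreover have "V 1 ((snd x - snd y) * th)" using V_mult[of 1 "snd x - snd y" 0 th] th(1) that(3)
        unfolding E2_def by simp
      ultimately show ?thesis using V_add that(3) unfolding E2_def by auto
    qed
    show "\<exists>x\<in>RK \<times> RK. E1 y (f x)" if y: "y \<in> OL" for y
    proof -
      define b where "b = (y - t y) / d"
      define a where "a = y - b * th"
      have tb: "t b = b" unfolding b_def using td d by (simp add: t_divide t_diff field_simps)
      have y0: "V 0 y" using y by simp
      have "V 0 (y - t y)" using V_diff[OF y0 t_V[THEN iffD2, OF y0]] .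
      then have bO: "V 0 b" unfolding b_def using V_div_unit[OF d(2) d(1)] by simp
      have ta: "t a = a"
      proof -
        have z: "y - t y - b * d = 0" unfolding b_def using d by simp
        have "t a = t y - b * t th" unfolding a_def using tb by (simp add: t_diff t_mult)
        also have "\<dots> = y - b * th - (y - t y - b * d)" unfolding d_def by (simp add: algebra_simps)
        finally show ?thesis unfolding a_def using z by simp
      qed
      have "V (0 + 0) (b * th)" using V_mult[OF bO th(1)] .
      then have aO: "V 0 a" unfolding a_def using V_diff[OF y0] by simp
      have "y = f (a, b)" unfolding f_def a_def by simp
      then show ?thesis using aO bO ta tb by (intro bexI[of _ "(a, b)"]) (auto simp: vge_def)
    qed
    show "finite (classes (RK \<times> RK) (E2 E1))" using classes_prod[OF eqvV finK] by blast
  qed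
  then show ?thesis using classes_prod[OF eqvV finK] by simp
qed

lemma kL_le_q_triv:
  assumes two: "ell = 2" and triv: "\<And>x. V 0 x \<Longrightarrow> V 1 (x - t x)"
  shows "card (classes OL E1) \<le> q"
proof -
  have "finite (classes OL E1) \<and> card (classes OL E1) \<le> card (classes RK E1)"
  proof (rule classes_le_inj[OF eqvV eqvV _ _ finK])
    show "x * t x \<in> RK" if "x \<in> OL" for x using that OL_mult t_V K_norm[of x] by (simp add: inK)
    show "E1 x y" if xy: "x \<in> OL" "y \<in> OL" "E1 (x * t x) (y * t y)" for x y
    proof -
      have x0: "V 0 x" and y0: "V 0 y" using xy by auto
      have a: "V 1 (x * t x - x * x)"
      proof -
        have "x * t x - x * x = x * (t x - x)" by (simp add: algebra_simps)
        moreover have "V 1 (t x - x)" using triv[OF x0] V_diff_sym by blast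
        ultimately show ?thesis using V_mult[OF x0, of 1] by simp
      qed
      have b: "V 1 (y * t y - y * y)"
      proof -
        have "y * t y - y * y = y * (t y - y)" by (simp add: algebra_simps)
        moreover have "V 1 (t y - y)" using triv[OF y0] V_diff_sym by blast
        ultimately show ?thesis using V_mult[OF y0, of 1] by simp
      qed
      have c: "V 1 (x * x - y * y)"
      proof -
        have "x * x - y * y = (x * t x - y * t y) - (x * t x - x * x) + (y * t y - y * y)" by simp
        then show ?thesis using V_add[OF V_diff[OF xy(3) a] b] by simp
      qed
      have d: "V 1 (2 * y * (x - y))"
      proof -
        have "V 1 (2::'a)" using two_V1[OF two] .
        then have "V (1 + 0) (2 * y)" using y0 by (rule V_mult)
        moreover have "V 0 (x - y)" using x0 y0 by (rule V_diff)
        ultimately have "V (1 + 0 + 0) (2 * y * (x - y))" by (rule V_mult)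
        then show ?thesis by simp
      qed
      have eq: "(x - y) * (x - y) = (x * x - y * y) - 2 * y * (x - y)" by (simp add: algebra_simps)
      have sq: "V 1 ((x - y) * (x - y))" unfolding eq using c d by (rule V_diff)
      show "E1 x y"
      proof (cases "x - y = 0")
        case False
        then have "1 \<le> 2 * w (x - y)" using sq by (simp add: vge_def wmult)
        then show ?thesis using False by (simp add: vge_def)
      qed (simp add: vge_def)
    qed
  qed
  then show ?thesis by simp
qed

lemma q_pos: "q \<ge> 1"
proof -
  have "classes RK E1 \<noteq> {}" unfolding classes_def by (auto intro!: exI[of _ 0])
  then show ?thesis using finK by (simp add: Suc_le_eq card_gt_0_iff)
qed

lemma kL_le_sq: assumes two: "ell = 2" shows "card (classes OL E1) \<le> q ^ 2"
proof (cases "\<exists>th. V 0 th \<and> \<not> V 1 (th - t th)")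
  case True then show ?thesis using kL_le_sq_basis by blast
next
  case False
  then have "card (classes OL E1) \<le> q" using kL_le_q_triv[OF two] by blast
  also have "\<dots> \<le> q ^ 2" using q_pos by (simp add: power2_eq_square)
  finally show ?thesis .
qed

lemma bound2:
  assumes two: "ell = 2"
  shows "finite (classes (C_filt w t lam n) (\<lambda>x y. V (e * int (Suc n)) (x - y))) \<and>
         card (classes (C_filt w t lam n) (\<lambda>x y. V (e * int (Suc n)) (x - y))) \<le> q ^ 2"
proof -
  define Cn where "Cn = C_filt w t lam n"
  have Cn: "x \<in> Cg \<and> V (e * int n) (x - 1)" if "x \<in> Cn" for x using that unfolding Cn_def C_filt_eq by auto
  have ln: "lam ^ n \<noteq> 0" "w (lam ^ n) = e * int n" using lam by (auto simp: wpow mult.commute)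
  define f where "f x = (x - 1) / lam ^ n" for x
  have fO: "f x \<in> OL" if "x \<in> Cn" for x
    using V_divide[of "e * int n" "x - 1" "lam ^ n"] Cn[OF that] ln unfolding f_def by simp
  have fd: "f x - f y = (x - y) / lam ^ n" for x y unfolding f_def by (simp add: diff_divide_distrib)
  show ?thesis
  proof (cases "e = 1")
    case True
    have "finite (classes Cn (\<lambda>x y. V (e * int (Suc n)) (x - y))) \<and>
          card (classes Cn (\<lambda>x y. V (e * int (Suc n)) (x - y))) \<le> card (classes OL E1)"
    proof (rule classes_le_inj[OF eqvV eqvV _ _ finL])
      show "f x \<in> OL" if "x \<in> Cn" for x using fO[OF that] .
      show "V (e * int (Suc n)) (x - y)" if "x \<in> Cn" "y \<in> Cn" "E1 (f x) (f y)" for x y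
        using that(3) unfolding fd V_div_iff[OF ln(1)] ln(2) True by (simp add: add.commute)
    qed
    then show ?thesis using kL_le_sq[OF two] unfolding Cn_def by linarith
  next
    case False
    then have e2: "e = 2" using e_cases by blast
    obtain p where p: "p \<noteq> 0" "w p = 1" using unif_ex by blast
    note triv = ram_trivial(2)[OF e2 p]
    have kq: "card (classes OL E1) \<le> q" using kL_le_q_triv[OF two triv] .
    have lift: "\<exists>a\<in>RK. E1 y a" if "y \<in> OL" for y
      using classes_fill[OF eqvV _ finL kq that] by blast
    have A: "finite (classes Cn (\<lambda>x y. V (e * int (Suc n)) (x - y))) \<and>
       card (classes Cn (\<lambda>x y. V (e * int (Suc n)) (x - y))) \<le> card (classes OL E2v)"
      if fin: "finite (classes OL E2v)"
    proof (rule classes_le_inj[OF eqvV eqvV _ _ fin])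
      show "f x \<in> OL" if "x \<in> Cn" for x using fO[OF that] .
      show "V (e * int (Suc n)) (x - y)" if "x \<in> Cn" "y \<in> Cn" "E2v (f x) (f y)" for x y
        using that(3) unfolding fd V_div_iff[OF ln(1)] ln(2) e2 by (simp add: algebra_simps)
    qed
    define g where "g z = fst z + snd z * p" for z
    have B: "finite (classes OL E2v) \<and> card (classes OL E2v) \<le> card (classes (RK \<times> RK) (E2 E1))"
    proof (rule classes_le_surj[OF eqv_E2[OF eqvV] eqvV])
      show "g z \<in> OL" if "z \<in> RK \<times> RK" for z
        using that V_add V_mult[of 0 "snd z" 0 p] p unfolding g_def by (auto simp: mem_Times_iff vge_def)
      show "E2v (g x) (g y)" if xy: "x \<in> RK \<times> RK" "y \<in> RK \<times> RK" "E2 E1 x y" for x y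
      proof -
        have eq: "g x - g y = (fst x - fst y) + (snd x - snd y) * p" unfolding g_def by (simp add: algebra_simps)
        have "fst x - fst y \<in> K" using xy by (auto simp: inK t_diff mem_Times_iff)
        then have a: "V 2 (fst x - fst y)" using K_even[OF e2] xy(3) unfolding E2_def by blast
        have "V (1 + 1) ((snd x - snd y) * p)" using V_mult[of 1 "snd x - snd y" 1 p] xy(3) p
          unfolding E2_def by (simp add: vge_def)
        then show ?thesis unfolding eq using V_add[OF a] by simp
      qed
      show "\<exists>z\<in>RK \<times> RK. E2v y (g z)" if y: "y \<in> OL" for y
      proof -
        obtain a where a: "a \<in> RK" "E1 y a" using lift[OF y] by blast
        define yy where "yy = (y - a) / p"
        have yyO: "V 0 yy" unfolding yy_def using V_divide[OF a(2) p(1)] p by simp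
        obtain b where b: "b \<in> RK" "E1 yy b" using lift yyO by blast
        have "y - g (a, b) = p * (yy - b)" unfolding g_def yy_def using p by (simp add: field_simps)
        moreover have "V (1 + 1) (p * (yy - b))" using V_mult[of 1 p 1 "yy - b"] b p by (simp add: vge_def)
        ultimately have "E2v y (g (a, b))" by simp
        then show ?thesis using a b by blast
      qed
      show "finite (classes (RK \<times> RK) (E2 E1))" using classes_prod[OF eqvV finK] by blast
    qed
    then show ?thesis using A classes_prod[OF eqvV finK] unfolding Cn_def by fastforce
  qed
qed

end


theorem lemma6p3:
  fixes w :: "'a::field_char_0 \<Rightarrow> int" and t :: "'a \<Rightarrow> 'a" and lam :: 'a and ell :: nat
  assumes "prime ell"
    and "ell_adic_local_field ell w"
    and "field_aut t" and "t \<circ> t = id" and "t \<noteq> id"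
    and "is_uniformizer w (fixed_field t) lam"
  shows "(ell \<noteq> 2 \<longrightarrow>
            (ram_index w (fixed_field t) > 1 \<longrightarrow>
               card (quot_cosets (C_filt w t lam 0) (C_filt w t lam 1))
                 = 2 * ell ^ inertia_degree ell w (fixed_field t)) \<and>
            (ram_index w (fixed_field t) = 1 \<longrightarrow>
               card (quot_cosets (C_filt w t lam 0) (C_filt w t lam 1))
                 = ell ^ inertia_degree ell w (fixed_field t) + 1)) \<and>
         (ell = 2 \<longrightarrow>
            (\<forall>n::nat. real n \<le> v_lam w lam 2 \<longrightarrow>
               finite (quot_cosets (C_filt w t lam n) (C_filt w t lam (Suc n))) \<and>
               card (quot_cosets (C_filt w t lam n) (C_filt w t lam (Suc n)))
                 \<le> 4 ^ inertia_degree ell w (fixed_field t)))"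
proof -
  have adic: "normalized_discrete_valuation w" "val_complete w" "finite (residue_field w UNIV)"
    "w (of_nat ell) > 0" using assms(2) unfolding ell_adic_local_field_def by auto
  interpret LF w t lam ell
    by (unfold_locales) (use assms adic in auto)
  have Q0: "quot_cosets (C_filt w t lam 0) (C_filt w t lam 1) =
      classes Cg (\<lambda>x y. V (e * 1) (x - y))"
    using quot_eq[of 0] C0_eq by simp
  have part1: "ell \<noteq> 2 \<longrightarrow>
            (e > 1 \<longrightarrow>
               card (quot_cosets (C_filt w t lam 0) (C_filt w t lam 1))
                 = 2 * ell ^ inertia_degree ell w K) \<and>
            (e = 1 \<longrightarrow>
               card (quot_cosets (C_filt w t lam 0) (C_filt w t lam 1))
                 = ell ^ inertia_degree ell w K + 1)"
  proof (intro impI conjI)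
    assume odd: "ell \<noteq> 2"
    {
      assume "e > 1"
      then have e2: "e = 2" using e_cases by auto
      show "card (quot_cosets (C_filt w t lam 0) (C_filt w t lam 1)) = 2 * ell ^ inertia_degree ell w K"
        unfolding Q0 e2 using count_ram[OF odd e2] q_inertia by simp
    }
    {
      assume e1: "e = 1"
      show "card (quot_cosets (C_filt w t lam 0) (C_filt w t lam 1)) = ell ^ inertia_degree ell w K + 1"
        unfolding Q0 e1 using count_unram[OF odd e1] q_inertia by simp
    }
  qed
  have part2: "ell = 2 \<longrightarrow>
            (\<forall>n::nat. real n \<le> v_lam w lam 2 \<longrightarrow>
               finite (quot_cosets (C_filt w t lam n) (C_filt w t lam (Suc n))) \<and>
               card (quot_cosets (C_filt w t lam n) (C_filt w t lam (Suc n)))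
                 \<le> 4 ^ inertia_degree ell w K)"
  proof (intro impI allI)
    fix n :: nat assume two: "ell = 2"
    have "(4::nat) ^ inertia_degree ell w K = q ^ 2"
      using q_inertia two by (simp add: power_mult[symmetric] mult.commute power_mult)
    then show "finite (quot_cosets (C_filt w t lam n) (C_filt w t lam (Suc n))) \<and>
               card (quot_cosets (C_filt w t lam n) (C_filt w t lam (Suc n))) \<le> 4 ^ inertia_degree ell w K"
      unfolding quot_eq using bound2[OF two, of n] by simp
  qed
  show ?thesis using part1 part2 by blast
qed


end
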